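(* Let $(G,Q)$ be either $(\mathrm{GL}_n(q),q)$ or $(\mathrm{GU}_n(q),q^2)$, with natural module $V=\mathbb{F}_Q^n$. For $1\le j\le n$, let $N_j$ be the number of $G$-orbits on the set of ordered $j$-tuples $(v_1,\dots,v_j)$ with $v_i\in V$. Then $N_j\le 8q^{j^2/4}$ in the first case and $N_j\le 2q^{j^2}$ in the second case. *)

theory Defs
  imports "HOL-Analysis.Analysis"
begin

definition GL_grp :: "('a::field ^'n^'n) set" where
  "GL_grp = {A. invertible A}"

text \<open>Conjugate transpose over F_{q^2}, where conjugation is the field automorphism x \<mapsto> x^q.\<close>
definition conj_transpose :: "nat \<Rightarrow> 'a::field ^'n^'n \<Rightarrow> 'a ^'n^'n" where
  "conj_transpose q A = (\<chi> i j. (A $ j $ i) ^ q)"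

text \<open>The general unitary group GU_n(q) inside GL_n(q^2), preserving the standard
  nondegenerate Hermitian form (x,y) \<mapsto> sum x_i y_i^q.\<close>
definition GU_grp :: "nat \<Rightarrow> ('a::field ^'n^'n) set" where
  "GU_grp q = {A. conj_transpose q A ** A = mat 1}"

definition tuple_orbits :: "('a::field ^'n^'n) set \<Rightarrow> nat \<Rightarrow> ('a^'n) list set set" where
  "tuple_orbits G j =
     (\<lambda>vs. {map (\<lambda>v. A *v v) vs | A. A \<in> G}) ` {vs :: ('a^'n) list. length vs = j}"

end

theory Submission
  imports Defs "HOL-Computational_Algebra.Primes" "HOL-Computational_Algebra.Polynomial"
begin

lemma ff_pow_card:
  fixes x :: "'a::{field,finite}"
  shows "x ^ CARD('a) = x"
proof (cases "x = 0")
  case False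
  have "x * (\<Prod>y\<in>UNIV-{0}. x * y) = x * x ^ (card (UNIV :: 'a set) - 1) * \<Prod>(UNIV-{0})"
    by (simp add: prod.distrib mult_ac)
  also have "x * x ^ (card (UNIV :: 'a set) - 1) = x ^ Suc (card (UNIV :: 'a set) - 1)"
    by (subst power_Suc) auto
  also have "Suc (card (UNIV :: 'a set) - 1) = card (UNIV :: 'a set)"
    using finite_UNIV_card_ge_0[where ?'a = 'a] by simp
  also have "(\<Prod>y\<in>UNIV-{0}. x * y) = (\<Prod>y\<in>UNIV-{0}. y)"
    by (rule prod.reindex_bij_witness[of _ "\<lambda>y. y / x" "\<lambda>y. x * y"]) (use False in auto)
  finally show ?thesis
    by simp
qed (use finite_UNIV_card_ge_0[where ?'a = 'a] in auto)

lemma ff_char_prime: "prime CHAR('a::{field,finite})"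
  by (rule prime_CHAR_semidom) (rule finite_imp_CHAR_pos, simp)

lemma of_nat_mod_char: "of_nat (n mod CHAR('a)) = (of_nat n :: 'a::comm_ring_1)"
proof -
  have "n = n mod CHAR('a) + CHAR('a) * (n div CHAR('a))" by simp
  hence "(of_nat n :: 'a) = of_nat (n mod CHAR('a)) + of_nat (CHAR('a)) * of_nat (n div CHAR('a))"
    by (metis of_nat_add of_nat_mult)
  thus ?thesis by simp
qed

fun zl :: "'a::field list \<Rightarrow> 'a set" where
  "zl [] = {0}"
| "zl (y # ys) = {s + of_nat c * y | s c. s \<in> zl ys \<and> c < CHAR('a)}"

context
  fixes dummy :: "'a::{field,finite}"
begin

lemma zl_zero: "(0::'a) \<in> zl ys"
  by (induction ys) (auto intro!: exI[of _ 0] simp: ff_char_prime prime_gt_0_nat)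

lemma zl_add: "(s::'a) \<in> zl ys \<Longrightarrow> t \<in> zl ys \<Longrightarrow> s + t \<in> zl ys"
proof (induction ys arbitrary: s t)
  case Nil then show ?case by simp
next
  case (Cons y ys)
  from Cons.prems obtain s1 c1 t1 c2 where s: "s = s1 + of_nat c1 * y" "s1 \<in> zl ys" "c1 < CHAR('a)"
    and t: "t = t1 + of_nat c2 * y" "t1 \<in> zl ys" "c2 < CHAR('a)" by auto
  have "s + t = (s1 + t1) + of_nat ((c1 + c2) mod CHAR('a)) * y"
    by (simp add: s t of_nat_mod_char algebra_simps)
  moreover have "(c1 + c2) mod CHAR('a) < CHAR('a)"
    using ff_char_prime[where 'a='a] by (simp add: prime_gt_0_nat)
  ultimately show ?case using Cons.IH[OF s(2) t(2)] by auto
qed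

lemma zl_smult: "(s::'a) \<in> zl ys \<Longrightarrow> of_nat m * s \<in> zl ys"
proof (induction ys arbitrary: s)
  case Nil then show ?case by simp
next
  case (Cons y ys)
  from Cons.prems obtain s1 c1 where s: "s = s1 + of_nat c1 * y" "s1 \<in> zl ys" "c1 < CHAR('a)"
    by auto
  have "of_nat m * s = of_nat m * s1 + of_nat ((m * c1) mod CHAR('a)) * y"
    by (simp add: s of_nat_mod_char algebra_simps)
  moreover have "(m * c1) mod CHAR('a) < CHAR('a)"
    using ff_char_prime[where 'a='a] by (simp add: prime_gt_0_nat)
  ultimately show ?case using Cons.IH[OF s(2)] by auto
qed

lemma zl_neg: "(s::'a) \<in> zl ys \<Longrightarrow> - s \<in> zl ys"
proof -
  assume s: "s \<in> zl ys"
  have p: "CHAR('a) > 0" using ff_char_prime[where 'a='a] by (simp add: prime_gt_0_nat)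
  have "of_nat (CHAR('a) - 1) * s + s = of_nat (CHAR('a) - 1 + 1) * s"
    by (simp add: algebra_simps)
  also have "CHAR('a) - 1 + 1 = CHAR('a)" using p by simp
  finally have "of_nat (CHAR('a) - 1) * s = - s" by (simp add: eq_neg_iff_add_eq_0)
  thus ?thesis using zl_smult[OF s, of "CHAR('a) - 1"] by simp
qed

lemma zl_set: "set ys \<subseteq> zl (ys :: 'a list)"
proof (induction ys)
  case Nil then show ?case by simp
next
  case (Cons y ys)
  have p: "1 < CHAR('a)" using ff_char_prime[where 'a='a] by (simp add: prime_gt_Suc_0_nat)
  have "\<exists>s c. y = s + of_nat c * y \<and> s \<in> zl ys \<and> c < CHAR('a)"
    using p zl_zero[of ys] by (intro exI[of _ 0] exI[of _ 1]) auto
  hence "y \<in> zl (y # ys)" by simp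
  moreover have "zl ys \<subseteq> zl (y # ys)"
  proof
    fix s assume "s \<in> zl ys"
    hence "\<exists>s' c. s = s' + of_nat c * y \<and> s' \<in> zl ys \<and> c < CHAR('a)"
      using p by (intro exI[of _ s] exI[of _ 0]) auto
    thus "s \<in> zl (y # ys)" by simp
  qed
  ultimately show ?case using Cons by auto
qed

lemma zl_card: "\<exists>k. card (zl (ys :: 'a list)) = CHAR('a) ^ k"
proof (induction ys)
  case Nil then show ?case by (auto intro!: exI[of _ 0])
next
  case (Cons y ys)
  then obtain k where k: "card (zl ys) = CHAR('a) ^ k" by auto
  have pp: "prime CHAR('a)" by (rule ff_char_prime)
  show ?case
  proof (cases "y \<in> zl ys")
    case True
    have "zl (y # ys) = zl ys"
    proof
      show "zl (y # ys) \<subseteq> zl ys"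
        using True by (auto intro!: zl_add zl_smult)
      show "zl ys \<subseteq> zl (y # ys)"
      proof
        fix s assume "s \<in> zl ys"
        hence "\<exists>s' c. s = s' + of_nat c * y \<and> s' \<in> zl ys \<and> c < CHAR('a)"
          using pp by (intro exI[of _ s] exI[of _ 0]) (auto simp: prime_gt_0_nat)
        thus "s \<in> zl (y # ys)" by simp
      qed
    qed
    thus ?thesis using k by auto
  next
    case False
    have eq: "zl (y # ys) = (\<lambda>(s,c). s + of_nat c * y) ` (zl ys \<times> {..<CHAR('a)})"
      by auto
    have inj: "inj_on (\<lambda>(s,c). s + of_nat c * y) (zl ys \<times> {..<CHAR('a)})"
    proof (rule inj_onI, clarsimp)
      fix s c s' c'
      assume s: "s \<in> zl ys" and s': "s' \<in> zl ys" and c: "c < CHAR('a)" and c': "c' < CHAR('a)"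
        and e: "s + of_nat c * y = s' + of_nat c' * y"
      have key: "\<And>s s' c c'. s \<in> zl ys \<Longrightarrow> s' \<in> zl ys \<Longrightarrow> c < CHAR('a) \<Longrightarrow> c' < c
          \<Longrightarrow> s + of_nat c * y = s' + of_nat c' * y \<Longrightarrow> False"
      proof -
        fix s s' c c' assume s: "s \<in> zl ys" and s': "s' \<in> zl ys" and c: "c < CHAR('a)"
          and lt: "c' < c" and e: "s + of_nat c * (y::'a) = s' + of_nat c' * y"
        define m where "m = c - c'"
        have m: "0 < m" "m < CHAR('a)" using lt c by (auto simp: m_def)
        have "of_nat m * y = s' - s"
          using e lt by (simp add: m_def of_nat_diff algebra_simps)
        hence my: "of_nat m * y \<in> zl ys" using zl_add[OF s' zl_neg[OF s]] by simp
        have "coprime m (CHAR('a))"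
          using m pp by (metis coprime_commute nat_dvd_not_less prime_imp_coprime)
        then obtain u v where uv: "m * u = CHAR('a) * v + 1"
          using bezout_nat[of m "CHAR('a)"] m by auto
        have "of_nat u * (of_nat m * y) = of_nat (m * u) * y" by (simp add: algebra_simps)
        also have "\<dots> = y" by (simp add: uv)
        finally have "y \<in> zl ys" using zl_smult[OF my, of u] by metis
        thus False using False by simp
      qed
      show "s = s' \<and> c = c'"
      proof (cases "c = c'")
        case True thus ?thesis using e by simp
      next
        case False
        then consider "c' < c" | "c < c'" by linarith
        thus ?thesis
        proof cases
          case 1 thus ?thesis using key[OF s s' c 1 e] by simp
        next
          case 2 thus ?thesis using key[OF s' s c' 2 e[symmetric]] by simp
        qed
      qed
    qed
    have "card (zl (y # ys)) = card (zl ys) * CHAR('a)"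
      unfolding eq by (subst card_image[OF inj]) (simp add: card_cartesian_product)
    thus ?thesis using k by (auto intro!: exI[of _ "Suc k"])
  qed
qed

end

lemma ff_card_char_power: "\<exists>k. CARD('a::{field,finite}) = CHAR('a) ^ k"
proof -
  obtain ys :: "'a list" where ys: "set ys = UNIV" using finite_list[of "UNIV::'a set"] by auto
  have "zl ys = UNIV" using zl_set[of ys] ys by auto
  thus ?thesis using zl_card[of ys] by metis
qed


lemma fiber_card_bound:
  fixes f :: "'a::{ab_group_add,finite} \<Rightarrow> 'c::ab_group_add"
  assumes add: "\<And>x y. f (x + y) = f x + f y"
  shows "CARD('a) \<le> card (range f) * card {x. f x = 0}"
proof -
  have f0: "f 0 = 0" using add[of 0 0] by simp
  have fm: "\<And>x y. f (x - y) = f x - f y"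
    by (metis add diff_add_cancel eq_diff_eq)
  have "UNIV = (\<Union>c\<in>range f. {x. f x = c})" by auto
  hence "CARD('a) = card (\<Union>c\<in>range f. {x. f x = c})" by simp
  also have "\<dots> \<le> (\<Sum>c\<in>range f. card {x. f x = c})" by (rule card_UN_le) simp
  also have "\<dots> \<le> (\<Sum>c\<in>range f. card {x. f x = 0})"
  proof (rule sum_mono)
    fix c assume "c \<in> range f"
    then obtain x0 where x0: "f x0 = c" by auto
    have "{x. f x = c} \<subseteq> (\<lambda>k. x0 + k) ` {x. f x = 0}"
    proof
      fix x assume "x \<in> {x. f x = c}"
      hence "f (x - x0) = 0" using x0 fm by simp
      thus "x \<in> (\<lambda>k. x0 + k) ` {x. f x = 0}" by (auto intro!: image_eqI[of _ _ "x - x0"])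
    qed
    hence "card {x. f x = c} \<le> card ((\<lambda>k. x0 + k) ` {x. f x = 0})" by (intro card_mono) auto
    also have "\<dots> \<le> card {x. f x = 0}" by (rule card_image_le) simp
    finally show "card {x. f x = c} \<le> card {x. f x = 0}" .
  qed
  also have "\<dots> = card (range f) * card {x. f x = 0}" by simp
  finally show ?thesis .
qed

locale qfield =
  fixes q :: nat and tyb :: "'b::{field,finite} itself"
  assumes card_q: "CARD('b) = q ^ 2"
begin

definition cj :: "'b \<Rightarrow> 'b" where "cj x = x ^ q"

lemma q_ge2: "q \<ge> 2"
proof -
  have "CARD('b) \<ge> 2"
  proof -
    have "{0::'b, 1} \<subseteq> UNIV" by simp
    hence "card {0::'b,1} \<le> CARD('b)" by (intro card_mono) auto
    thus ?thesis by simp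
  qed
  hence h: "q ^ 2 \<ge> 2" using card_q by simp
  show ?thesis
  proof (rule ccontr)
    assume "\<not> q \<ge> 2"
    hence "q \<le> 1" by simp
    hence "q ^ 2 \<le> 1 ^ 2" by (rule power_mono) simp
    hence "q ^ 2 \<le> 1" by simp
    thus False using h by simp
  qed
qed

lemma q_char_pow: "\<exists>e. q = CHAR('b) ^ e"
proof -
  obtain k where k: "CARD('b) = CHAR('b) ^ k" using ff_card_char_power by blast
  have "q dvd CHAR('b) ^ k" using k card_q by (metis dvd_triv_left power2_eq_square)
  thus ?thesis using divides_primepow_nat[OF ff_char_prime[where 'a='b]] by blast
qed

lemma cj_add: "cj (x + y) = cj x + cj y"
proof -
  obtain e where "q = CHAR('b) ^ e" using q_char_pow by blast
  thus ?thesis unfolding cj_def by (intro freshmans_dream'[OF ff_char_prime]) 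
qed

lemma cj_sum: "cj (sum f A) = sum (\<lambda>i. cj (f i)) A"
proof -
  obtain e where "q = CHAR('b) ^ e" using q_char_pow by blast
  thus ?thesis unfolding cj_def by (intro freshmans_dream_sum'[OF ff_char_prime]) 
qed

lemma cj_mult: "cj (x * y) = cj x * cj y"
  unfolding cj_def by (simp add: power_mult_distrib)

lemma cj_0[simp]: "cj 0 = 0" using q_ge2 unfolding cj_def by simp
lemma cj_1[simp]: "cj 1 = 1" unfolding cj_def by simp

lemma cj_cj[simp]: "cj (cj x) = x"
proof -
  have "cj (cj x) = x ^ (q * q)" unfolding cj_def by (simp add: power_mult)
  also have "q * q = CARD('b)" using card_q by (simp add: power2_eq_square)
  finally show ?thesis by (simp add: ff_pow_card)
qed

lemma cj_uminus: "cj (- x) = - cj x"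
  using cj_add[of x "-x"] by (simp add: eq_neg_iff_add_eq_0 add.commute)

lemma cj_diff: "cj (x - y) = cj x - cj y"
  using cj_add[of x "-y"] cj_uminus[of y] by simp

lemma cj_inverse: "cj (inverse x) = inverse (cj x)"
  unfolding cj_def by (simp add: power_inverse)

lemma cj_divide: "cj (x / y) = cj x / cj y"
  unfolding divide_inverse cj_mult cj_inverse ..

lemma cj_eq_0_iff[simp]: "cj x = 0 \<longleftrightarrow> x = 0"
  by (metis cj_0 cj_cj)

lemma cj_inj: "cj x = cj y \<longleftrightarrow> x = y"
  by (metis cj_cj)

lemma card_fix: "card {x::'b. cj x = x} \<le> q"
proof -
  define P :: "'b poly" where "P = monom 1 q + [:0, -1:]"
  have dm: "degree (monom (1::'b) q) = q" by (simp add: degree_monom_eq)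
  have d1: "degree [:0, -1::'b:] = 1" by simp
  have dP: "degree P = q" unfolding P_def using dm d1 q_ge2 by (subst degree_add_eq_left) auto
  hence "P \<noteq> 0" using q_ge2 by auto
  hence "card {x. poly P x = 0} \<le> degree P" by (rule card_poly_roots_bound)
  moreover have "{x. poly P x = 0} = {x. cj x = x}"
    unfolding P_def cj_def by (auto simp: poly_monom)
  ultimately show ?thesis using dP by simp
qed

definition tr :: "'b \<Rightarrow> 'b" where "tr x = x + cj x"

lemma tr_add: "tr (x + y) = tr x + tr y"
  unfolding tr_def by (simp add: cj_add algebra_simps)

lemma cj_tr: "cj (tr x) = tr x"
  unfolding tr_def by (simp add: cj_add add.commute)

lemma card_ker_tr: "card {x::'b. tr x = 0} \<le> q"
proof -
  define P :: "'b poly" where "P = monom 1 q + [:0, 1:]"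
  have dm: "degree (monom (1::'b) q) = q" by (simp add: degree_monom_eq)
  have d1: "degree [:0, 1::'b:] = 1" by simp
  have dP: "degree P = q" unfolding P_def using dm d1 q_ge2 by (subst degree_add_eq_left) auto
  hence "P \<noteq> 0" using q_ge2 by auto
  hence "card {x. poly P x = 0} \<le> degree P" by (rule card_poly_roots_bound)
  moreover have "{x. poly P x = 0} = {x. tr x = 0}"
    unfolding P_def cj_def tr_def by (auto simp: poly_monom add.commute)
  ultimately show ?thesis using dP by simp
qed

lemma tr_card_facts: "range tr = {x::'b. cj x = x} \<and> card {x::'b. tr x = 0} \<ge> q"
proof -
  have b: "CARD('b) \<le> card (range tr) * card {x::'b. tr x = 0}"
    by (rule fiber_card_bound) (rule tr_add)
  have sub: "range tr \<subseteq> {x. cj x = x}" using cj_tr by auto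
  have "card (range tr) \<le> card {x::'b. cj x = x}" by (rule card_mono[OF _ sub]) simp
  hence c1: "card (range tr) \<le> q" using card_fix by linarith
  have q0: "q > 0" using q_ge2 by simp
  have "card (range tr) * card {x::'b. tr x = 0} \<le> card (range tr) * q"
    using card_ker_tr by (rule mult_le_mono2)
  hence "q * q \<le> card (range tr) * q" using b card_q unfolding power2_eq_square by linarith
  hence c2: "card (range tr) \<ge> q" using q0 mult_le_cancel2 by blast
  have "card (range tr) * card {x::'b. tr x = 0} \<le> q * card {x::'b. tr x = 0}"
    using c1 by (rule mult_le_mono1)
  hence "q * q \<le> q * card {x::'b. tr x = 0}" using b card_q unfolding power2_eq_square by linarith
  hence c3: "card {x::'b. tr x = 0} \<ge> q" using q0 mult_le_cancel1 by blast
  have "card {x::'b. cj x = x} \<le> card (range tr)" using card_fix c2 by linarith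
  hence "range tr = {x. cj x = x}"
    using card_seteq[OF _ sub] by simp
  thus ?thesis using c3 by simp
qed

lemma tr_surj: "cj c = c \<Longrightarrow> \<exists>u. u + cj u = c"
proof -
  assume "cj c = c"
  hence "c \<in> range tr" using tr_card_facts by simp
  then obtain u where "c = tr u" by auto
  thus ?thesis unfolding tr_def by auto
qed

lemma tr_ker_nz: "\<exists>s::'b. s \<noteq> 0 \<and> s + cj s = 0"
proof -
  have "card {x::'b. tr x = 0} \<ge> 2" using tr_card_facts q_ge2 by linarith
  moreover have "{x::'b. tr x = 0} \<subseteq> {0} \<Longrightarrow> card {x::'b. tr x = 0} \<le> 1"
    using card_mono[of "{0::'b}" "{x::'b. tr x = 0}"] by simp
  ultimately have "\<not> {x::'b. tr x = 0} \<subseteq> {0}" by linarith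
  thus ?thesis unfolding tr_def by auto
qed

end


context qfield
begin

definition hf :: "'b^'n \<Rightarrow> 'b^'n \<Rightarrow> 'b" where
  "hf x y = (\<Sum>k\<in>UNIV. cj (x$k) * y$k)"

lemma hf_add_right: "hf x (y + z) = hf x y + hf x z"
  unfolding hf_def by (simp add: algebra_simps sum.distrib)
lemma hf_add_left: "hf (x + y) z = hf x z + hf y z"
  unfolding hf_def by (simp add: algebra_simps sum.distrib cj_add)
lemma hf_smult_right: "hf x (c *s y) = c * hf x y"
  unfolding hf_def by (simp add: algebra_simps sum_distrib_left)
lemma hf_smult_left: "hf (c *s x) y = cj c * hf x y"
  unfolding hf_def by (simp add: algebra_simps sum_distrib_left cj_mult)
lemma hf_diff_right: "hf x (y - z) = hf x y - hf x z"
  unfolding hf_def by (simp add: algebra_simps sum_subtractf)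
lemma hf_diff_left: "hf (x - y) z = hf x z - hf y z"
  unfolding hf_def by (simp add: algebra_simps sum_subtractf cj_diff)
lemma hf_zero_right[simp]: "hf x 0 = 0"
  unfolding hf_def by simp
lemma hf_zero_left[simp]: "hf 0 x = 0"
  unfolding hf_def by simp
lemma hf_sym: "hf y x = cj (hf x y)"
  unfolding hf_def by (simp add: cj_sum cj_mult mult.commute)
lemma hf_axis: "hf (axis k 1) y = y $ k"
proof -
  have "hf (axis k 1) y = (\<Sum>i\<in>UNIV. if i = k then y $ k else 0)"
    unfolding hf_def by (intro sum.cong) (auto simp: axis_def)
  thus ?thesis by simp
qed
lemma hf_nondeg: "(\<And>k. hf (axis k 1) y = 0) \<Longrightarrow> y = 0"
  by (simp add: hf_axis vec_eq_iff)

lemma hf_self_fix: "cj (hf x x) = hf x x"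
  using hf_sym[of x x] by simp

lemma GU_iff: "A \<in> GU_grp q \<longleftrightarrow> (\<forall>i l. (\<Sum>k\<in>UNIV. cj (A$k$i) * A$k$l) = (if i = l then 1 else 0))"
  unfolding GU_grp_def conj_transpose_def matrix_matrix_mult_def mat_def
  by (auto simp: vec_eq_iff cj_def)

lemma GU_iso:
  assumes "A \<in> GU_grp q"
  shows "hf (A *v x) (A *v y) = hf x y"
proof -
  have G: "\<And>i l. (\<Sum>k\<in>UNIV. cj (A$k$i) * A$k$l) = (if i = l then 1 else 0)"
    using assms GU_iff by blast
  have "hf (A *v x) (A *v y) = (\<Sum>k\<in>UNIV. cj (\<Sum>i\<in>UNIV. A$k$i * x$i) * (\<Sum>l\<in>UNIV. A$k$l * y$l))"
    unfolding hf_def matrix_vector_mult_def by simp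
  also have "\<dots> = (\<Sum>k\<in>UNIV. (\<Sum>i\<in>UNIV. cj (A$k$i) * cj (x$i)) * (\<Sum>l\<in>UNIV. A$k$l * y$l))"
    by (simp only: cj_sum cj_mult)
  also have "\<dots> = (\<Sum>k\<in>UNIV. \<Sum>i\<in>UNIV. \<Sum>l\<in>UNIV. cj (x$i) * y$l * (cj (A$k$i) * A$k$l))"
    by (simp only: sum_product) (simp add: mult_ac)
  also have "\<dots> = (\<Sum>i\<in>UNIV. \<Sum>k\<in>UNIV. \<Sum>l\<in>UNIV. cj (x$i) * y$l * (cj (A$k$i) * A$k$l))"
    by (rule sum.swap)
  also have "\<dots> = (\<Sum>i\<in>UNIV. \<Sum>l\<in>UNIV. \<Sum>k\<in>UNIV. cj (x$i) * y$l * (cj (A$k$i) * A$k$l))"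
    by (rule sum.cong[OF refl], rule sum.swap)
  also have "\<dots> = (\<Sum>i\<in>UNIV. \<Sum>l\<in>UNIV. cj (x$i) * y$l * (if i = l then 1 else 0))"
    by (simp only: G flip: sum_distrib_left)
  also have "\<dots> = hf x y"
    unfolding hf_def by (simp add: if_distrib cong: if_cong)
  finally show ?thesis .
qed

lemma iso_GU:
  fixes T :: "'b^'n \<Rightarrow> 'b^'n"
  assumes lin: "Vector_Spaces.linear (*s) (*s) T"
    and iso: "\<And>x y. hf (T x) (T y) = hf x y"
  shows "matrix T \<in> GU_grp q"
proof -
  have "\<And>i l. (\<Sum>k\<in>UNIV. cj (matrix T$k$i) * matrix T$k$l) = (if i = l then 1 else 0)"
  proof -
    fix i l :: 'n
    have "(\<Sum>k\<in>UNIV. cj (matrix T$k$i) * matrix T$k$l) = hf (T (axis i 1)) (T (axis l 1))"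
      unfolding hf_def matrix_def by simp
    also have "\<dots> = hf (axis i 1) (axis l 1)" by (rule iso)
    also have "\<dots> = (if i = l then 1 else 0)" by (simp only: hf_axis) (simp add: axis_def)
    finally show "(\<Sum>k\<in>UNIV. cj (matrix T$k$i) * matrix T$k$l) = (if i = l then 1 else 0)" .
  qed
  thus ?thesis using GU_iff by blast
qed

lemma GU_mult: "(A::'b^'n^'n) \<in> GU_grp q \<Longrightarrow> B \<in> GU_grp q \<Longrightarrow> A ** B \<in> GU_grp q"
proof -
  assume A: "A \<in> GU_grp q" and B: "B \<in> GU_grp q"
  have "matrix (\<lambda>x. (A ** B) *v x) \<in> GU_grp q"
    by (rule iso_GU[OF matrix_vector_mul_linear_gen]) (simp add: GU_iso[OF A] GU_iso[OF B] flip: matrix_vector_mul_assoc)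
  thus ?thesis by simp
qed

lemma GU_one: "(mat 1 :: 'b^'n^'n) \<in> GU_grp q"
proof -
  have "matrix (\<lambda>x. mat 1 *v x) \<in> (GU_grp q :: ('b^'n^'n) set)"
    by (rule iso_GU[OF matrix_vector_mul_linear_gen]) simp
  thus ?thesis by (simp only: matrix_of_matrix_vector_mul)
qed

lemma GU_inj: "(A::'b^'n^'n) \<in> GU_grp q \<Longrightarrow> A *v x = A *v y \<Longrightarrow> x = y"
proof -
  assume A: "A \<in> GU_grp q" and e: "A *v x = A *v y"
  have "\<And>k. hf (axis k 1) (x - y) = 0"
  proof -
    fix k
    have "hf (axis k 1) (x - y) = hf (A *v axis k 1) (A *v (x - y))" by (simp add: GU_iso[OF A])
    also have "A *v (x - y) = 0" using e by (simp add: matrix_vector_mult_diff_distrib)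
    finally show "hf (axis k 1) (x - y) = 0" by simp
  qed
  hence "x - y = 0" by (rule hf_nondeg)
  thus ?thesis by simp
qed

end


definition lfun :: "('a::field^'n \<Rightarrow> 'a) \<Rightarrow> bool" where
  "lfun \<phi> \<longleftrightarrow> (\<forall>x y. \<phi> (x + y) = \<phi> x + \<phi> y) \<and> (\<forall>c x. \<phi> (c *s x) = c * \<phi> x)"

lemma lfun_add: "lfun \<phi> \<Longrightarrow> \<phi> (x + y) = \<phi> x + \<phi> y" by (simp add: lfun_def)
lemma lfun_scale: "lfun \<phi> \<Longrightarrow> \<phi> (c *s x) = c * \<phi> x" by (simp add: lfun_def)
lemma lfun_zero: "lfun \<phi> \<Longrightarrow> \<phi> 0 = 0"
  using lfun_scale[of \<phi> 0 0] by simp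
lemma lfun_sum: "lfun \<phi> \<Longrightarrow> \<phi> (sum f A) = (\<Sum>a\<in>A. \<phi> (f a))"
  by (induction A rule: infinite_finite_induct) (auto simp: lfun_zero lfun_add)
lemma lfun_diff: "lfun \<phi> \<Longrightarrow> \<phi> (x - y) = \<phi> x - \<phi> y"
  using lfun_add[of \<phi> "x - y" y] by simp
lemma lfun_plus: "lfun \<phi> \<Longrightarrow> lfun \<psi> \<Longrightarrow> lfun (\<lambda>x. \<phi> x + \<psi> x)"
  by (simp add: lfun_def algebra_simps)

lemma lfun_expand: "lfun \<phi> \<Longrightarrow> \<phi> x = (\<Sum>j\<in>UNIV. x$j * \<phi> (axis j 1))"
proof -
  assume l: "lfun \<phi>"
  have "\<phi> x = \<phi> (\<Sum>j\<in>UNIV. x$j *s axis j 1)" by (simp add: basis_expansion)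
  also have "\<dots> = (\<Sum>j\<in>UNIV. x$j * \<phi> (axis j 1))" by (simp add: lfun_sum[OF l] lfun_scale[OF l])
  finally show ?thesis .
qed

lemma functional_exists:
  fixes S :: "('a::field^'n) set"
  assumes "v \<notin> vec.span S"
  shows "\<exists>\<phi>. lfun \<phi> \<and> (\<forall>u\<in>vec.span S. \<phi> u = 0) \<and> \<phi> v = 1"
proof -
  obtain B where B: "B \<subseteq> vec.span S" "vec.independent B" "vec.span S \<subseteq> vec.span B"
    using vec.maximal_independent_subset[of "vec.span S"] by blast
  have sp: "vec.span B = vec.span S"
    using B vec.span_mono vec.span_span by (metis subset_antisym)
  have vB: "v \<notin> vec.span B" using assms sp by simp
  hence vB': "v \<notin> B" using vec.span_base by blast
  have ind: "vec.independent (insert v B)" using vec.independent_insertI[OF vB B(2)] .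
  obtain k :: 'n where True by simp
  obtain g where g: "Vector_Spaces.linear (*s) (*s) g"
    "\<forall>x\<in>insert v B. g x = (if x = v then axis k 1 else 0)"
    using vec.linear_independent_extend[OF ind, of "\<lambda>x. if x = v then axis k 1 else 0"] by blast
  define \<phi> where "\<phi> x = g x $ k" for x
  have l: "lfun \<phi>" unfolding lfun_def \<phi>_def by (simp add: vec.linear_add[OF g(1)] vec.linear_scale[OF g(1)])
  have gB: "\<And>x. x \<in> B \<Longrightarrow> g x = 0" using g(2) vB' by auto
  have "\<forall>u\<in>vec.span B. g u = 0"
    using vec.linear_eq_0_on_span[OF g(1) gB] by blast
  hence "\<forall>u\<in>vec.span S. \<phi> u = 0" using sp by (simp add: \<phi>_def)
  moreover have "\<phi> v = 1" using g(2) by (simp add: \<phi>_def axis_def)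
  ultimately show ?thesis using l by blast
qed

lemma functional_two:
  fixes S :: "('a::field^'n) set"
  assumes "v \<notin> vec.span S" "w \<notin> vec.span S"
  shows "\<exists>\<phi>. lfun \<phi> \<and> (\<forall>u\<in>vec.span S. \<phi> u = 0) \<and> \<phi> v \<noteq> 0 \<and> \<phi> w \<noteq> 0"
proof -
  obtain \<phi>1 where p1: "lfun \<phi>1" "\<forall>u\<in>vec.span S. \<phi>1 u = 0" "\<phi>1 v = 1"
    using functional_exists[OF assms(1)] by blast
  obtain \<phi>2 where p2: "lfun \<phi>2" "\<forall>u\<in>vec.span S. \<phi>2 u = 0" "\<phi>2 w = 1"
    using functional_exists[OF assms(2)] by blast
  show ?thesis
  proof (cases "\<phi>1 w \<noteq> 0")
    case True thus ?thesis using p1 by auto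
  next
    case False
    show ?thesis
    proof (cases "\<phi>2 v \<noteq> 0")
      case True thus ?thesis using p2 by auto
    next
      case False2: False
      have "lfun (\<lambda>x. \<phi>1 x + \<phi>2 x)" using lfun_plus[OF p1(1) p2(1)] .
      thus ?thesis using p1 p2 False False2
        by (intro exI[of _ "\<lambda>x. \<phi>1 x + \<phi>2 x"]) auto
    qed
  qed
qed

definition r1 :: "('a::field^'n \<Rightarrow> 'a) \<Rightarrow> 'a^'n \<Rightarrow> 'a^'n^'n" where
  "r1 \<phi> d = mat 1 + (\<chi> i j. d$i * \<phi> (axis j 1))"

lemma r1_apply: "lfun \<phi> \<Longrightarrow> r1 \<phi> d *v x = x + \<phi> x *s d"
proof -
  assume l: "lfun \<phi>"
  show ?thesis
    unfolding r1_def matrix_vector_mult_add_rdistrib matrix_vector_mul_lid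
    by (simp add: matrix_vector_mult_def vec_eq_iff lfun_expand[OF l, of x]
        sum_distrib_left algebra_simps)
qed

lemma invertible_by_apply:
  fixes M M' :: "'a::field^'n^'n"
  assumes "\<And>x. M *v (M' *v x) = x" "\<And>x. M' *v (M *v x) = x"
  shows "invertible M"
proof -
  have "M ** M' = mat 1" using assms(1) by (simp add: matrix_eq matrix_vector_mul_assoc[symmetric])
  moreover have "M' ** M = mat 1" using assms(2) by (simp add: matrix_eq matrix_vector_mul_assoc[symmetric])
  ultimately show ?thesis unfolding invertible_def by blast
qed

lemma GL_step:
  fixes S :: "('a::field^'n) set"
  assumes "v \<notin> vec.span S" "w \<notin> vec.span S"
  shows "\<exists>M. invertible M \<and> (\<forall>u\<in>vec.span S. M *v u = u) \<and> M *v v = w"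
proof -
  obtain \<phi> where p: "lfun \<phi>" "\<forall>u\<in>vec.span S. \<phi> u = 0" "\<phi> v = 1" "\<phi> w \<noteq> 0"
  proof -
    obtain \<psi> where p: "lfun \<psi>" "\<forall>u\<in>vec.span S. \<psi> u = 0" "\<psi> v \<noteq> 0" "\<psi> w \<noteq> 0"
      using functional_two[OF assms] by blast
    define \<phi> where "\<phi> x = \<psi> x / \<psi> v" for x
    have "lfun \<phi>" using p(1) unfolding lfun_def \<phi>_def by (simp add: add_divide_distrib)
    moreover have "\<forall>u\<in>vec.span S. \<phi> u = 0" using p(2) by (simp add: \<phi>_def)
    moreover have "\<phi> v = 1" "\<phi> w \<noteq> 0" using p(3,4) by (auto simp: \<phi>_def)
    ultimately show ?thesis using that by blast
  qed
  define d where "d = w - v"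
  define M where "M = r1 \<phi> d"
  define \<phi>' where "\<phi>' x = - (\<phi> x / \<phi> w)" for x
  have l': "lfun \<phi>'" using p(1) unfolding lfun_def \<phi>'_def by (simp add: add_divide_distrib)
  define M' where "M' = r1 \<phi>' d"
  have Ma: "\<And>x. M *v x = x + \<phi> x *s d" unfolding M_def by (rule r1_apply[OF p(1)])
  have M'a: "\<And>x. M' *v x = x + \<phi>' x *s d" unfolding M'_def by (rule r1_apply[OF l'])
  have pd: "\<phi> d = \<phi> w - 1" using p by (simp add: d_def lfun_diff)
  have "\<And>x. M *v (M' *v x) = x"
  proof -
    fix x
    have "M *v (M' *v x) = x + (\<phi>' x + \<phi> x + \<phi>' x * \<phi> d) *s d"
      by (simp add: Ma M'a lfun_add[OF p(1)] lfun_scale[OF p(1)] algebra_simps vector_sadd_rdistrib)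
    also have "\<phi>' x + \<phi> x + \<phi>' x * \<phi> d = 0"
      using p(4) by (simp add: \<phi>'_def pd field_simps)
    finally show "M *v (M' *v x) = x" by simp
  qed
  moreover have "\<And>x. M' *v (M *v x) = x"
  proof -
    fix x
    have "M' *v (M *v x) = x + (\<phi> x + \<phi>' x + \<phi> x * \<phi>' d) *s d"
      by (simp add: Ma M'a lfun_add[OF l'] lfun_scale[OF l'] algebra_simps vector_sadd_rdistrib)
    also have "\<phi> x + \<phi>' x + \<phi> x * \<phi>' d = 0"
      using p(4) by (simp add: \<phi>'_def pd field_simps)
    finally show "M' *v (M *v x) = x" by simp
  qed
  ultimately have "invertible M" by (rule invertible_by_apply)
  moreover have "\<forall>u\<in>vec.span S. M *v u = u" using p(2) by (simp add: Ma)
  moreover have "M *v v = w" using p(3) by (simp add: Ma d_def)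
  ultimately show ?thesis by blast
qed


context qfield
begin

lemma hf_neg_right: "hf x (- y) = - hf x y"
  using hf_diff_right[of x 0 y] by simp
lemma hf_neg_left: "hf (- x) y = - hf x y"
  using hf_diff_left[of 0 x y] by simp

lemma hf_lfun: "lfun (hf (x::'b^'n))"
  unfolding lfun_def by (simp add: hf_add_right hf_smult_right)

lemma riesz:
  fixes \<phi> :: "'b^'n \<Rightarrow> 'b"
  assumes "lfun \<phi>" shows "\<exists>y. \<forall>x. hf y x = \<phi> x"
proof -
  define y :: "'b^'n" where "y = (\<chi> k. cj (\<phi> (axis k 1)))"
  have "\<forall>x. hf y x = \<phi> x"
  proof
    fix x
    show "hf y x = \<phi> x"
      unfolding lfun_expand[OF assms, of x] unfolding hf_def y_def by (simp add: mult.commute)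
  qed
  thus ?thesis by blast
qed

lemma perp_vec:
  fixes S :: "('b^'n) set"
  assumes "v \<notin> vec.span S" "w \<notin> vec.span S"
  shows "\<exists>y. (\<forall>u\<in>vec.span S. hf u y = 0) \<and> hf y v \<noteq> 0 \<and> hf y w \<noteq> 0"
proof -
  obtain \<phi> where p: "lfun \<phi>" "\<forall>u\<in>vec.span S. \<phi> u = 0" "\<phi> v \<noteq> 0" "\<phi> w \<noteq> 0"
    using functional_two[OF assms] by blast
  obtain y where y: "\<forall>x. hf y x = \<phi> x" using riesz[OF p(1)] by blast
  have "\<forall>u\<in>vec.span S. hf u y = 0"
  proof
    fix u assume "u \<in> vec.span S"
    hence "hf y u = 0" using p(2) y by simp
    thus "hf u y = 0" using hf_sym[of y u] by simp
  qed
  thus ?thesis using y p by auto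
qed

lemma iso_GU':
  fixes M :: "'b^'n^'n"
  assumes "\<And>x y. hf (M *v x) (M *v y) = hf x y"
  shows "M \<in> GU_grp q"
proof -
  have "matrix (\<lambda>x. M *v x) \<in> GU_grp q"
    by (rule iso_GU[OF matrix_vector_mul_linear_gen]) (rule assms)
  thus ?thesis by (simp only: matrix_of_matrix_vector_mul)
qed

lemma good_step:
  fixes U :: "('b^'n) set"
  assumes perp: "\<forall>u\<in>U. hf u (v - w) = 0" and nv: "hf v v = hf w w" and a: "hf (v - w) v \<noteq> 0"
  shows "\<exists>C\<in>GU_grp q. (\<forall>u\<in>U. C *v u = u) \<and> C *v v = w"
proof -
  define x where "x = v - w"
  define a where "a = hf x v"
  have a0: "a \<noteq> 0" using a by (simp add: a_def x_def)
  define \<phi> where "\<phi> y = - (hf x y / a)" for y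
  have l: "lfun \<phi>" unfolding lfun_def \<phi>_def by (simp add: hf_add_right hf_smult_right add_divide_distrib)
  define C where "C = r1 \<phi> x"
  have Ca: "\<And>y. C *v y = y + \<phi> y *s x" unfolding C_def by (rule r1_apply[OF l])
  have hxx: "hf x x = a + cj a"
  proof -
    have "cj a = hf v x" unfolding a_def by (simp add: hf_sym[of v x])
    thus ?thesis unfolding a_def x_def using nv
      by (simp add: hf_diff_left hf_diff_right hf_sym[of w v])
  qed
  have hx: "\<And>y. hf x y = - a * \<phi> y" using a0 by (simp add: \<phi>_def)
  have hy: "\<And>y. hf y x = - cj a * cj (\<phi> y)"
  proof -
    fix y
    have "hf y x = cj (hf x y)" by (rule hf_sym)
    also have "\<dots> = cj (- a * \<phi> y)" by (simp only: hx)
    finally show "hf y x = - cj a * cj (\<phi> y)" by (simp add: cj_mult cj_uminus)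
  qed
  have iso: "\<And>y z. hf (C *v y) (C *v z) = hf y z"
  proof -
    fix y z
    have "hf (C *v y) (C *v z) = hf y z + \<phi> z * hf y x + cj (\<phi> y) * hf x z + cj (\<phi> y) * \<phi> z * hf x x"
      by (simp add: Ca hf_add_left hf_add_right hf_smult_left hf_smult_right algebra_simps)
    also have "\<dots> = hf y z + cj (\<phi> y) * \<phi> z * (hf x x - a - cj a)"
      by (simp add: hx hy algebra_simps)
    also have "\<dots> = hf y z" by (simp add: hxx)
    finally show "hf (C *v y) (C *v z) = hf y z" .
  qed
  have "\<forall>u\<in>U. C *v u = u"
  proof
    fix u assume "u \<in> U"
    hence "hf u x = 0" using perp by (simp add: x_def)
    hence "hf x u = 0" by (simp add: hf_sym[of u x])
    thus "C *v u = u" by (simp add: Ca \<phi>_def)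
  qed
  moreover have "C *v v = w" using a0 by (simp add: Ca \<phi>_def a_def x_def)
  moreover have "C \<in> GU_grp q" by (rule iso_GU') (rule iso)
  ultimately show ?thesis by blast
qed

lemma find_t:
  assumes "\<alpha> \<noteq> 0" "cj \<beta> = \<beta>"
  shows "\<exists>t::'b. t \<noteq> 0 \<and> t * cj \<alpha> + cj t * \<alpha> + cj t * t * \<beta> = 0"
proof (cases "\<beta> = 0")
  case True
  obtain s where s: "s \<noteq> 0" "s + cj s = 0" using tr_ker_nz by blast
  define t where "t = cj s / cj \<alpha>"
  have ct: "cj t = s / \<alpha>" by (simp add: t_def cj_divide)
  have "t * cj \<alpha> + cj t * \<alpha> + cj t * t * \<beta> = cj s + s"
    using assms True by (simp add: ct) (simp add: t_def)
  moreover have "t \<noteq> 0" using s assms by (simp add: t_def)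
  ultimately show ?thesis using s by (auto simp: add.commute)
next
  case False
  define c where "c = - \<beta> / (\<alpha> * cj \<alpha>)"
  have cc: "cj c = c" using assms by (simp add: c_def cj_divide cj_mult cj_uminus mult.commute)
  obtain u where u: "u + cj u = c" using tr_surj[OF cc] by blast
  have c0: "c \<noteq> 0" using False assms by (simp add: c_def)
  hence u0: "u \<noteq> 0" using u by auto
  define s where "s = 1 / u"
  have s0: "s \<noteq> 0" "cj s \<noteq> 0" using u0 by (auto simp: s_def)
  define t where "t = cj s / cj \<alpha>"
  have ct: "cj t = s / \<alpha>" by (simp add: t_def cj_divide)
  have cs: "cj s = 1 / cj u" by (simp add: s_def cj_divide)
  have e: "t * cj \<alpha> + cj t * \<alpha> + cj t * t * \<beta> = cj s + s + s * cj s * \<beta> / (\<alpha> * cj \<alpha>)"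
    unfolding ct unfolding t_def using assms by (simp add: field_simps)
  also have "\<dots> = s * cj s * (u + cj u - c)"
    unfolding cs using s0 u0 assms by (simp add: c_def s_def field_simps)
  also have "\<dots> = 0" using u by simp
  finally show ?thesis using s0 assms by (intro exI[of _ t]) (auto simp: t_def)
qed

lemma witt_step:
  fixes S :: "('b^'n) set"
  assumes v: "v \<notin> vec.span S" and w: "w \<notin> vec.span S"
    and ip: "\<forall>u\<in>vec.span S. hf u v = hf u w" and nv: "hf v v = hf w w"
  shows "\<exists>C\<in>GU_grp q. (\<forall>u\<in>vec.span S. C *v u = u) \<and> C *v v = w"
proof -
  have perp: "\<forall>u\<in>vec.span S. hf u (v - w) = 0" using ip by (simp add: hf_diff_right)
  show ?thesis
  proof (cases "hf (v - w) v \<noteq> 0")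
    case True thus ?thesis using good_step[OF perp nv] by blast
  next
    case False
    hence a0: "hf (v - w) v = 0" by simp
    obtain y where y: "\<forall>u\<in>vec.span S. hf u y = 0" "hf y v \<noteq> 0" "hf y w \<noteq> 0"
      using perp_vec[OF v w] by blast
    define \<alpha> where "\<alpha> = hf y v"
    define \<beta> where "\<beta> = hf y y"
    have bb: "cj \<beta> = \<beta>" unfolding \<beta>_def by (rule hf_self_fix)
    obtain t where t: "t \<noteq> 0" "t * cj \<alpha> + cj t * \<alpha> + cj t * t * \<beta> = 0"
      using find_t[OF _ bb] y(2) \<alpha>_def by blast
    define z where "z = v + t *s y"
    have hvy: "hf v y = cj \<alpha>" unfolding \<alpha>_def by (rule hf_sym)
    have nz: "hf z z = hf v v"
    proof -
      have "hf z z = hf v v + (t * cj \<alpha> + cj t * \<alpha> + cj t * t * \<beta>)"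
        unfolding z_def
        by (simp add: hf_add_left hf_add_right hf_smult_left hf_smult_right hvy
            \<alpha>_def[symmetric] \<beta>_def[symmetric] algebra_simps)
      thus ?thesis using t by simp
    qed
    have p1: "\<forall>u\<in>vec.span S. hf u (v - z) = 0"
      using y(1) by (simp add: z_def hf_diff_right hf_add_right hf_smult_right hf_neg_right)
    have n1: "hf v v = hf z z" using nz by simp
    have a1: "hf (v - z) v \<noteq> 0"
      using t y(2) by (simp add: z_def hf_smult_left hf_neg_left)
    obtain C1 where C1: "C1 \<in> GU_grp q" "\<forall>u\<in>vec.span S. C1 *v u = u" "C1 *v v = z"
      using good_step[OF p1 n1 a1] by blast
    have p2: "\<forall>u\<in>vec.span S. hf u (z - w) = 0"
      using y(1) perp by (simp add: z_def hf_diff_right hf_add_right hf_smult_right algebra_simps)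
    have n2: "hf z z = hf w w" using nz nv by simp
    have a2: "hf (z - w) z \<noteq> 0"
    proof -
      have hxy: "hf (v - w) y = cj \<alpha> - cj (hf y w)"
        by (simp add: hf_diff_left hvy hf_sym[of w y])
      have "hf (z - w) z = hf (v - w) v + t * hf (v - w) y + (cj t * \<alpha> + cj t * t * \<beta>)"
        unfolding z_def
        by (simp add: hf_add_left hf_add_right hf_smult_left hf_smult_right hf_diff_left hf_diff_right
            \<alpha>_def[symmetric] \<beta>_def[symmetric] algebra_simps)
      also have "cj t * \<alpha> + cj t * t * \<beta> = - (t * cj \<alpha>)" using t(2) by (simp add: algebra_simps eq_neg_iff_add_eq_0)
      also have "hf (v - w) v + t * hf (v - w) y + - (t * cj \<alpha>) = - (t * cj (hf y w))"
        unfolding hxy a0 by (simp add: algebra_simps)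
      finally show ?thesis using t(1) y(3) by simp
    qed
    obtain C2 where C2: "C2 \<in> GU_grp q" "\<forall>u\<in>vec.span S. C2 *v u = u" "C2 *v z = w"
      using good_step[OF p2 n2 a2] by blast
    have "C2 ** C1 \<in> GU_grp q" using GU_mult[OF C2(1) C1(1)] .
    moreover have "\<forall>u\<in>vec.span S. (C2 ** C1) *v u = u"
      using C1(2) C2(2) by (simp flip: matrix_vector_mul_assoc)
    moreover have "(C2 ** C1) *v v = w" using C1(3) C2(3) by (simp flip: matrix_vector_mul_assoc)
    ultimately show ?thesis by blast
  qed
qed

end


fun piv :: "('a::field^'n) list \<Rightarrow> ('a^'n) list" where
  "piv [] = []"
| "piv (v # xs) = (if v \<in> vec.span (set xs) then piv xs else v # piv xs)"

lemma span_insert_cong: "vec.span A = vec.span B \<Longrightarrow> vec.span (insert a A) = vec.span (insert a B)"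
  by (simp add: vec.span_insert)

lemma piv_span: "vec.span (set (piv xs)) = vec.span (set xs)"
proof (induction xs)
  case Nil then show ?case by simp
next
  case (Cons v xs)
  show ?case
  proof (cases "v \<in> vec.span (set xs)")
    case True
    thus ?thesis using Cons by (simp add: vec.span_redundant)
  next
    case False
    hence "set (piv (v # xs)) = insert v (set (piv xs))" by simp
    hence "vec.span (set (piv (v # xs))) = vec.span (insert v (set xs))"
      using span_insert_cong[OF Cons.IH] by simp
    thus ?thesis by simp
  qed
qed

fun ndep :: "('a::field^'n) list \<Rightarrow> nat" where
  "ndep [] = 0"
| "ndep (v # xs) = (if v \<in> vec.span (set xs) then Suc (ndep xs) else ndep xs)"

lemma ndep_le: "ndep xs \<le> length xs"
  by (induction xs) auto

lemma length_piv: "length (piv xs) = length xs - ndep xs"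
proof (induction xs)
  case Nil then show ?case by simp
next
  case (Cons v xs)
  thus ?case using ndep_le[of xs] by auto
qed

fun lcomb :: "'a::field list \<Rightarrow> ('a^'n) list \<Rightarrow> 'a^'n" where
  "lcomb (a # c) (p # ps) = a *s p + lcomb c ps"
| "lcomb _ _ = 0"

lemma lcomb_exists: "v \<in> vec.span (set ps) \<Longrightarrow> \<exists>c. length c = length ps \<and> v = lcomb c ps"
proof (induction ps arbitrary: v)
  case Nil then show ?case by simp
next
  case (Cons p ps)
  have "\<exists>k. v - k *s p \<in> vec.span (set ps)"
    using Cons.prems vec.span_breakdown_eq[of v p "set ps"] by simp
  then obtain k where "v - k *s p \<in> vec.span (set ps)" by blast
  then obtain c where "length c = length ps" "v - k *s p = lcomb c ps" using Cons.IH by blast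
  thus ?case by (intro exI[of _ "k # c"]) (auto simp: algebra_simps)
qed

lemma lcomb_map: "A *v lcomb c ps = lcomb c (map (\<lambda>v. A *v v) ps)"
proof (induction c ps rule: lcomb.induct)
  case (1 a c p ps)
  thus ?case by (simp add: vec.linear_add[OF matrix_vector_mul_linear_gen]
        vec.linear_scale[OF matrix_vector_mul_linear_gen])
qed simp_all

definition coef :: "('a::field^'n) list \<Rightarrow> 'a^'n \<Rightarrow> 'a list" where
  "coef ps v = (SOME c. length c = length ps \<and> v = lcomb c ps)"

lemma coef_spec: "v \<in> vec.span (set ps) \<Longrightarrow> length (coef ps v) = length ps \<and> v = lcomb (coef ps v) ps"
  unfolding coef_def by (rule someI_ex) (rule lcomb_exists)

lemma span_map_inj:
  fixes A :: "'a::field^'n^'n"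
  assumes inj: "\<And>x y. A *v x = A *v y \<Longrightarrow> x = y"
  shows "A *v v \<in> vec.span ((\<lambda>v. A *v v) ` S) \<longleftrightarrow> v \<in> vec.span S"
proof -
  have "vec.span ((\<lambda>v. A *v v) ` S) = (\<lambda>v. A *v v) ` vec.span S"
    by (simp add: vec.linear_span_image[OF matrix_vector_mul_linear_gen])
  thus ?thesis using inj by auto
qed

lemma piv_map:
  fixes A :: "'a::field^'n^'n"
  assumes inj: "\<And>x y. A *v x = A *v y \<Longrightarrow> x = y"
  shows "piv (map (\<lambda>v. A *v v) xs) = map (\<lambda>v. A *v v) (piv xs)"
  by (induction xs) (simp_all add: span_map_inj[OF inj])

lemma invertible_inj:
  fixes A :: "'a::field^'n^'n"
  assumes "invertible A" "A *v x = A *v y" shows "x = y"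
proof -
  obtain A' where "A' ** A = mat 1" using assms(1) unfolding invertible_def by blast
  hence "A' *v (A *v x) = x" "A' *v (A *v y) = y" by (simp_all add: matrix_vector_mul_assoc)
  thus ?thesis using assms(2) by metis
qed

fun ginv :: "('a::field^'n) list \<Rightarrow> 'a list option list" where
  "ginv [] = []"
| "ginv (v # xs) = (if v \<in> vec.span (set xs) then Some (coef (piv xs) v) else None) # ginv xs"

lemma length_ginv: "length (ginv xs) = length xs"
  by (induction xs) auto

lemma GL_trans:
  "ginv (xs :: ('a::field^'n) list) = ginv (ys :: ('a^'n) list) \<Longrightarrow> \<exists>A::'a^'n^'n. invertible A \<and> map (\<lambda>v. A *v v) xs = ys"
proof (induction xs arbitrary: ys)
  case Nil
  hence "ys = []" using length_ginv[of ys] by simp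
  moreover have "invertible (mat 1 :: 'a^'n^'n)" unfolding invertible_def by auto
  ultimately show ?case by (intro exI[where x="mat 1"]) auto
next
  case (Cons v xs)
  obtain w ys' where ys: "ys = w # ys'" using Cons.prems length_ginv[of ys]
    by (cases ys) auto
  have tl: "ginv xs = ginv ys'" and hd: "(if v \<in> vec.span (set xs) then Some (coef (piv xs) v) else None) =
     (if w \<in> vec.span (set ys') then Some (coef (piv ys') w) else None)"
    using Cons.prems ys by auto
  obtain A where A: "invertible A" "map (\<lambda>v. A *v v) xs = ys'" using Cons.IH[OF tl] by blast
  have injA: "\<And>x y. A *v x = A *v y \<Longrightarrow> x = y" using invertible_inj[OF A(1)] by blast
  have pv: "piv ys' = map (\<lambda>v. A *v v) (piv xs)"
    unfolding A(2)[symmetric] by (rule piv_map[OF injA])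
  have sp: "A *v v \<in> vec.span (set ys') \<longleftrightarrow> v \<in> vec.span (set xs)"
    unfolding A(2)[symmetric] set_map by (rule span_map_inj[OF injA])
  show ?case
  proof (cases "v \<in> vec.span (set xs)")
    case True
    hence wsp: "w \<in> vec.span (set ys')" using hd by (auto split: if_splits)
    have c: "coef (piv xs) v = coef (piv ys') w" using hd True wsp by simp
    have "v \<in> vec.span (set (piv xs))" using True piv_span[of xs] by simp
    hence "v = lcomb (coef (piv xs) v) (piv xs)" using coef_spec[of v "piv xs"] by blast
    hence "A *v v = A *v lcomb (coef (piv xs) v) (piv xs)" by (rule arg_cong)
    also have "\<dots> = lcomb (coef (piv xs) v) (piv ys')" by (simp only: lcomb_map pv)
    finally have e1: "A *v v = lcomb (coef (piv xs) v) (piv ys')" .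
    have "w \<in> vec.span (set (piv ys'))" using wsp piv_span[of ys'] by simp
    hence "w = lcomb (coef (piv ys') w) (piv ys')" using coef_spec[of w "piv ys'"] by blast
    hence "A *v v = w" using e1 c by simp
    thus ?thesis using A ys by auto
  next
    case False
    hence wsp: "w \<notin> vec.span (set ys')" using hd by (auto split: if_splits)
    have "A *v v \<notin> vec.span (set ys')" using sp False by simp
    then obtain M where M: "invertible M" "\<forall>u\<in>vec.span (set ys'). M *v u = u" "M *v (A *v v) = w"
      using GL_step[OF _ wsp] by blast
    have "invertible (M ** A)" using invertible_mult[OF M(1) A(1)] .
    moreover have "map (\<lambda>x. (M ** A) *v x) xs = ys'"
    proof -
      have "map (\<lambda>x. (M ** A) *v x) xs = map (\<lambda>x. M *v x) ys'"
        using A(2) by (auto simp flip: matrix_vector_mul_assoc)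
      also have "\<dots> = ys'" using M(2) by (intro map_idI) (auto intro: vec.span_base)
      finally show ?thesis .
    qed
    moreover have "(M ** A) *v v = w" using M(3) by (simp flip: matrix_vector_mul_assoc)
    ultimately show ?thesis using ys by auto
  qed
qed

lemma orbits_card_le:
  fixes G :: "('a::{field,finite}^'n^'n) set" and inv :: "('a^'n) list \<Rightarrow> 'c"
  assumes closed: "\<And>A B. A \<in> G \<Longrightarrow> B \<in> G \<Longrightarrow> A ** B \<in> G"
    and trans: "\<And>xs ys. inv xs = inv ys \<Longrightarrow> \<exists>A\<in>G. map (\<lambda>v. A *v v) xs = ys"
  shows "card (tuple_orbits G j) \<le> card (inv ` {xs. length xs = j})"
proof -
  define L where "L = {xs :: ('a^'n) list. length xs = j}"
  define orb where "orb xs = {map (\<lambda>v. A *v v) xs | A. A \<in> G}" for xs :: "('a^'n) list"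
  have sub: "\<And>xs ys. inv xs = inv ys \<Longrightarrow> orb ys \<subseteq> orb xs"
  proof
    fix xs ys z assume e: "inv xs = inv ys" and z: "z \<in> orb ys"
    obtain A where A: "A \<in> G" "map (\<lambda>v. A *v v) xs = ys" using trans[OF e] by blast
    obtain B where B: "B \<in> G" "z = map (\<lambda>v. B *v v) ys" using z unfolding orb_def by blast
    have "z = map (\<lambda>v. (B ** A) *v v) xs" using A(2) B(2) by (auto simp flip: matrix_vector_mul_assoc)
    thus "z \<in> orb xs" unfolding orb_def using closed[OF B(1) A(1)] by blast
  qed
  have oe: "\<And>xs ys. inv xs = inv ys \<Longrightarrow> orb xs = orb ys"
  proof -
    fix xs ys assume "inv xs = inv ys"
    thus "orb xs = orb ys" using sub[of xs ys] sub[of ys xs] by auto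
  qed
  define rep where "rep c = (SOME xs. xs \<in> L \<and> inv xs = c)" for c
  have "tuple_orbits G j = orb ` L" unfolding tuple_orbits_def orb_def L_def by simp
  also have "\<dots> = (\<lambda>c. orb (rep c)) ` (inv ` L)"
  proof -
    show "orb ` L = (\<lambda>c. orb (rep c)) ` inv ` L"
    proof -
      have "\<And>xs. xs \<in> L \<Longrightarrow> orb (rep (inv xs)) = orb xs"
      proof -
        fix xs assume "xs \<in> L"
        hence "\<exists>ys. ys \<in> L \<and> inv ys = inv xs" by blast
        hence "rep (inv xs) \<in> L \<and> inv (rep (inv xs)) = inv xs"
          unfolding rep_def by (rule someI_ex)
        thus "orb (rep (inv xs)) = orb xs" using oe[of "rep (inv xs)" xs] by simp
      qed
      thus ?thesis by (auto simp: image_image intro: image_cong)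
    qed
  qed
  also have "card \<dots> \<le> card (inv ` L)" by (rule card_image_le) (simp add: L_def finite_list_length)
  finally show ?thesis unfolding L_def .
qed


context qfield
begin

fun uinv :: "('b^'n) list \<Rightarrow> ('b list + ('b list \<times> 'b)) list" where
  "uinv [] = []"
| "uinv (v # xs) = (if v \<in> vec.span (set xs) then Inl (coef (piv xs) v)
       else Inr (map (\<lambda>p. hf p v) (piv xs), hf v v)) # uinv xs"

lemma length_uinv: "length (uinv xs) = length xs"
  by (induction xs) auto

lemma hf_span_eq:
  fixes S :: "('b^'n) set"
  assumes "\<forall>p\<in>S. hf p a = hf p b" "u \<in> vec.span S"
  shows "hf u a = hf u b"
  using assms(2)
proof (induction rule: vec.span_induct_alt)
  case base then show ?case by simp
next
  case (step c x y)
  thus ?case using assms(1) by (simp add: hf_add_left hf_smult_left)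
qed

lemma GU_trans:
  "uinv (xs :: ('b^'n) list) = uinv (ys :: ('b^'n) list) \<Longrightarrow> \<exists>A\<in>GU_grp q. map (\<lambda>v. A *v v) xs = ys"
proof (induction xs arbitrary: ys)
  case Nil
  hence "ys = []" using length_uinv[of ys] by simp
  thus ?case using GU_one by (intro bexI[where x="mat 1"]) auto
next
  case (Cons v xs)
  obtain w ys' where ys: "ys = w # ys'" using Cons.prems length_uinv[of ys]
    by (cases ys) auto
  have tl: "uinv xs = uinv ys'" and hd: "(if v \<in> vec.span (set xs) then Inl (coef (piv xs) v)
       else Inr (map (\<lambda>p. hf p v) (piv xs), hf v v)) =
     (if w \<in> vec.span (set ys') then Inl (coef (piv ys') w)
       else Inr (map (\<lambda>p. hf p w) (piv ys'), hf w w))"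
    using Cons.prems ys by auto
  obtain A where A: "A \<in> GU_grp q" "map (\<lambda>v. A *v v) xs = ys'" using Cons.IH[OF tl] by blast
  have injA: "\<And>x y. A *v x = A *v y \<Longrightarrow> x = y" using GU_inj[OF A(1)] by blast
  have pv: "piv ys' = map (\<lambda>v. A *v v) (piv xs)"
    unfolding A(2)[symmetric] by (rule piv_map[OF injA])
  have sp: "A *v v \<in> vec.span (set ys') \<longleftrightarrow> v \<in> vec.span (set xs)"
    unfolding A(2)[symmetric] set_map by (rule span_map_inj[OF injA])
  show ?case
  proof (cases "v \<in> vec.span (set xs)")
    case True
    hence wsp: "w \<in> vec.span (set ys')" using hd by (auto split: if_splits)
    have c: "coef (piv xs) v = coef (piv ys') w" using hd True wsp by simp
    have "v \<in> vec.span (set (piv xs))" using True piv_span[of xs] by simp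
    hence "v = lcomb (coef (piv xs) v) (piv xs)" using coef_spec[of v "piv xs"] by blast
    hence "A *v v = A *v lcomb (coef (piv xs) v) (piv xs)" by (rule arg_cong)
    also have "\<dots> = lcomb (coef (piv xs) v) (piv ys')" by (simp only: lcomb_map pv)
    finally have e1: "A *v v = lcomb (coef (piv xs) v) (piv ys')" .
    have "w \<in> vec.span (set (piv ys'))" using wsp piv_span[of ys'] by simp
    hence "w = lcomb (coef (piv ys') w) (piv ys')" using coef_spec[of w "piv ys'"] by blast
    hence "A *v v = w" using e1 c by simp
    thus ?thesis using A ys by auto
  next
    case False
    hence wsp: "w \<notin> vec.span (set ys')" using hd by (auto split: if_splits)
    have d: "map (\<lambda>p. hf p v) (piv xs) = map (\<lambda>p. hf p w) (piv ys')" "hf v v = hf w w"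
      using hd False wsp by auto
    define v' where "v' = A *v v"
    have v'sp: "v' \<notin> vec.span (set ys')" using sp False by (simp add: v'_def)
    have "\<forall>p\<in>set (piv ys'). hf p v' = hf p w"
    proof
      fix p' assume "p' \<in> set (piv ys')"
      then obtain p where p: "p \<in> set (piv xs)" "p' = A *v p" using pv by auto
      have "hf p' v' = hf p v" using p(2) by (simp add: v'_def GU_iso[OF A(1)])
      also have "\<dots> = hf (A *v p) w"
      proof -
        have "map (\<lambda>p. hf p v) (piv xs) = map (\<lambda>p. hf (A *v p) w) (piv xs)"
          using d(1) pv by simp
        thus ?thesis using p(1) by simp
      qed
      finally show "hf p' v' = hf p' w" using p(2) by simp
    qed
    hence ip: "\<forall>u\<in>vec.span (set ys'). hf u v' = hf u w"
      using hf_span_eq piv_span[of ys'] by metis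
    have nv: "hf v' v' = hf w w" using d(2) by (simp add: v'_def GU_iso[OF A(1)])
    obtain C where C: "C \<in> GU_grp q" "\<forall>u\<in>vec.span (set ys'). C *v u = u" "C *v v' = w"
      using witt_step[OF v'sp wsp ip nv] by blast
    have "C ** A \<in> GU_grp q" using GU_mult[OF C(1) A(1)] .
    moreover have "map (\<lambda>x. (C ** A) *v x) xs = ys'"
    proof -
      have "map (\<lambda>x. (C ** A) *v x) xs = map (\<lambda>x. C *v x) ys'"
        using A(2) by (auto simp flip: matrix_vector_mul_assoc)
      also have "\<dots> = ys'" using C(2) by (intro map_idI) (auto intro: vec.span_base)
      finally show ?thesis .
    qed
    moreover have "(C ** A) *v v = w" using C(3) by (simp add: v'_def flip: matrix_vector_mul_assoc)
    ultimately show ?thesis using ys by auto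
  qed
qed

end


lemma card_lists_len: "card {c :: ('a::finite) list. length c = n} = CARD('a) ^ n"
  using card_lists_length_eq[of "UNIV :: 'a set" n] by simp

fun gval :: "nat \<Rightarrow> nat \<Rightarrow> ('a::finite) list option list set" where
  "gval 0 k = (if k = 0 then {[]} else {})"
| "gval (Suc m) k = (\<lambda>l. None # l) ` gval m k \<union>
     (if k = 0 then {} else (\<lambda>(c,l). Some c # l) ` ({c. length c = m - (k - 1)} \<times> gval m (k - 1)))"

fun Cg :: "nat \<Rightarrow> nat \<Rightarrow> nat \<Rightarrow> nat" where
  "Cg q 0 k = (if k = 0 then 1 else 0)"
| "Cg q (Suc m) k = Cg q m k + (if k = 0 then 0 else q ^ (m - (k - 1)) * Cg q m (k - 1))"

lemma gval_card: "finite (gval m k :: ('a::finite) list option list set) \<and> card (gval m k :: 'a list option list set) \<le> Cg CARD('a) m k"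
proof (induction m arbitrary: k)
  case 0 then show ?case by simp
next
  case (Suc m)
  define S1 where "S1 = (\<lambda>l. None # l) ` (gval m k :: 'a list option list set)"
  define S2 where "S2 = (if k = 0 then {} else (\<lambda>(c,l). Some c # l) ` ({c::'a list. length c = m - (k - 1)} \<times> gval m (k - 1)))"
  have e: "gval (Suc m) k = S1 \<union> S2" by (simp add: S1_def S2_def)
  have f1: "finite S1" "card S1 \<le> Cg CARD('a) m k"
    using Suc[of k] card_image_le[of "gval m k :: 'a list option list set" "\<lambda>l. None # l"]
    by (auto simp: S1_def)
  have f2: "finite S2 \<and> card S2 \<le> (if k = 0 then 0 else CARD('a) ^ (m - (k - 1)) * Cg CARD('a) m (k - 1))"
  proof (cases "k = 0")
    case True thus ?thesis by (simp add: S2_def)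
  next
    case False
    have fin: "finite ({c::'a list. length c = m - (k - 1)} \<times> (gval m (k - 1) :: 'a list option list set))"
      using Suc[of "k - 1"] by (simp add: finite_list_length)
    have "card S2 \<le> card ({c::'a list. length c = m - (k - 1)} \<times> (gval m (k - 1) :: 'a list option list set))"
      unfolding S2_def using False card_image_le[OF fin] by simp
    also have "\<dots> = CARD('a) ^ (m - (k - 1)) * card (gval m (k - 1) :: 'a list option list set)"
      by (simp add: card_cartesian_product card_lists_len)
    also have "\<dots> \<le> CARD('a) ^ (m - (k - 1)) * Cg CARD('a) m (k - 1)"
      using Suc[of "k - 1"] by simp
    finally show ?thesis using False fin by (simp add: S2_def)
  qed
  have "card (gval (Suc m) k :: 'a list option list set) \<le> card S1 + card S2"
    unfolding e by (rule card_Un_le)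
  thus ?case using f1 f2 e by (auto split: if_splits)
qed

lemma ginv_in: "length xs = m \<Longrightarrow> ginv (xs :: ('a::{field,finite}^'n) list) \<in> gval m (ndep xs)"
proof (induction xs arbitrary: m)
  case Nil then show ?case by simp
next
  case (Cons v xs)
  then obtain m' where m: "m = Suc m'" "length xs = m'" by auto
  show ?case
  proof (cases "v \<in> vec.span (set xs)")
    case True
    have "v \<in> vec.span (set (piv xs))" using True piv_span[of xs] by simp
    hence "length (coef (piv xs) v) = length (piv xs)" using coef_spec by blast
    moreover have "length (piv xs) = length xs - ndep xs" by (rule length_piv)
    ultimately have "length (coef (piv xs) v) = m' - ndep xs" using m by simp
    thus ?thesis using True Cons.IH[OF m(2)] m by auto
  next
    case False
    thus ?thesis using Cons.IH[OF m(2)] m by auto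
  qed
qed

lemma GL_count:
  "card (ginv ` {xs :: ('a::{field,finite}^'n) list. length xs = m}) \<le> (\<Sum>k\<le>m. Cg CARD('a) m k)"
proof -
  have "ginv ` {xs :: ('a^'n) list. length xs = m} \<subseteq> (\<Union>k\<le>m. gval m k)"
    using ginv_in ndep_le by fastforce
  hence "card (ginv ` {xs :: ('a^'n) list. length xs = m}) \<le> card (\<Union>k\<le>m. gval m k :: 'a list option list set)"
    by (intro card_mono) (auto simp: gval_card)
  also have "\<dots> \<le> (\<Sum>k\<le>m. card (gval m k :: 'a list option list set))" by (rule card_UN_le) simp
  also have "\<dots> \<le> (\<Sum>k\<le>m. Cg CARD('a) m k)" by (intro sum_mono) (simp add: gval_card)
  finally show ?thesis .
qed

context qfield
begin

fun uval :: "nat \<Rightarrow> nat \<Rightarrow> ('b list + ('b list \<times> 'b)) list set" where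
  "uval 0 k = (if k = 0 then {[]} else {})"
| "uval (Suc m) k = (\<lambda>(g,l). Inr g # l) ` (({g. length g = m - k} \<times> {x. cj x = x}) \<times> uval m k) \<union>
     (if k = 0 then {} else (\<lambda>(c,l). Inl c # l) ` ({c. length c = m - (k - 1)} \<times> uval m (k - 1)))"

fun Cu :: "nat \<Rightarrow> nat \<Rightarrow> nat" where
  "Cu 0 k = (if k = 0 then 1 else 0)"
| "Cu (Suc m) k = q ^ (2 * (m - k)) * q * Cu m k + (if k = 0 then 0 else q ^ (2 * (m - (k - 1))) * Cu m (k - 1))"

lemma uval_card: "finite (uval m k) \<and> card (uval m k) \<le> Cu m k"
proof (induction m arbitrary: k)
  case 0 then show ?case by simp
next
  case (Suc m)
  define S1 where "S1 = (\<lambda>(g,l). Inr g # l) ` (({g::'b list. length g = m - k} \<times> {x. cj x = x}) \<times> uval m k)"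
  define S2 where "S2 = (if k = 0 then {} else (\<lambda>(c,l). Inl c # l) ` ({c::'b list. length c = m - (k - 1)} \<times> uval m (k - 1)))"
  have e: "uval (Suc m) k = S1 \<union> S2" by (simp add: S1_def S2_def)
  have f1: "finite S1 \<and> card S1 \<le> q ^ (2 * (m - k)) * q * Cu m k"
  proof -
    have fin: "finite (({g::'b list. length g = m - k} \<times> {x. cj x = x}) \<times> uval m k)"
      using Suc[of k] by (simp add: finite_list_length)
    have "card S1 \<le> card (({g::'b list. length g = m - k} \<times> {x. cj x = x}) \<times> uval m k)"
      unfolding S1_def by (rule card_image_le[OF fin])
    also have "\<dots> = CARD('b) ^ (m - k) * card {x. cj x = x} * card (uval m k)"
      by (simp add: card_cartesian_product card_lists_len)
    also have "\<dots> \<le> (q ^ 2) ^ (m - k) * q * Cu m k"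
      using Suc[of k] card_fix card_q by (intro mult_le_mono) auto
    also have "(q ^ 2) ^ (m - k) = q ^ (2 * (m - k))" by (simp add: power_mult)
    finally show ?thesis using fin S1_def by simp
  qed
  have f2: "finite S2 \<and> card S2 \<le> (if k = 0 then 0 else q ^ (2 * (m - (k - 1))) * Cu m (k - 1))"
  proof (cases "k = 0")
    case True thus ?thesis by (simp add: S2_def)
  next
    case False
    have fin: "finite ({c::'b list. length c = m - (k - 1)} \<times> uval m (k - 1))"
      using Suc[of "k - 1"] by (simp add: finite_list_length)
    have "card S2 \<le> card ({c::'b list. length c = m - (k - 1)} \<times> uval m (k - 1))"
      unfolding S2_def using False card_image_le[OF fin] by simp
    also have "\<dots> = CARD('b) ^ (m - (k - 1)) * card (uval m (k - 1))"
      by (simp add: card_cartesian_product card_lists_len)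
    also have "\<dots> \<le> (q ^ 2) ^ (m - (k - 1)) * Cu m (k - 1)"
      using Suc[of "k - 1"] card_q by simp
    also have "(q ^ 2) ^ (m - (k - 1)) = q ^ (2 * (m - (k - 1)))" by (simp add: power_mult)
    finally show ?thesis using False fin by (simp add: S2_def)
  qed
  have "card (uval (Suc m) k) \<le> card S1 + card S2"
    unfolding e by (rule card_Un_le)
  thus ?case using f1 f2 e by (auto split: if_splits)
qed

lemma uinv_in: "length xs = m \<Longrightarrow> uinv (xs :: ('b^'n) list) \<in> uval m (ndep xs)"
proof (induction xs arbitrary: m)
  case Nil then show ?case by simp
next
  case (Cons v xs)
  then obtain m' where m: "m = Suc m'" "length xs = m'" by auto
  show ?case
  proof (cases "v \<in> vec.span (set xs)")
    case True
    have "v \<in> vec.span (set (piv xs))" using True piv_span[of xs] by simp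
    hence "length (coef (piv xs) v) = length (piv xs)" using coef_spec by blast
    moreover have "length (piv xs) = length xs - ndep xs" by (rule length_piv)
    ultimately have "length (coef (piv xs) v) = m' - ndep xs" using m by simp
    thus ?thesis using True Cons.IH[OF m(2)] m by auto
  next
    case False
    have "length (piv xs) = length xs - ndep xs" by (rule length_piv)
    hence "length (map (\<lambda>p. hf p v) (piv xs)) = m' - ndep xs" using m by simp
    thus ?thesis using False Cons.IH[OF m(2)] m hf_self_fix[of v] by auto
  qed
qed

lemma GU_count:
  "card (uinv ` {xs :: ('b^'n) list. length xs = m}) \<le> (\<Sum>k\<le>m. Cu m k)"
proof -
  have "uinv ` {xs :: ('b^'n) list. length xs = m} \<subseteq> (\<Union>k\<le>m. uval m k)"
    using uinv_in ndep_le by fastforce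
  hence "card (uinv ` {xs :: ('b^'n) list. length xs = m}) \<le> card (\<Union>k\<le>m. uval m k)"
    by (intro card_mono) (auto simp: uval_card)
  also have "\<dots> \<le> (\<Sum>k\<le>m. card (uval m k))" by (rule card_UN_le) simp
  also have "\<dots> \<le> (\<Sum>k\<le>m. Cu m k)" by (intro sum_mono) (simp add: uval_card)
  finally show ?thesis .
qed

end


fun Pg :: "real \<Rightarrow> nat \<Rightarrow> real" where
  "Pg x 0 = 1"
| "Pg x (Suc k) = Pg x k * (1 - x ^ Suc k)"

lemma Pg_pos: "0 \<le> x \<Longrightarrow> x < 1 \<Longrightarrow> Pg x k > 0"
proof (induction k)
  case 0 then show ?case by simp
next
  case (Suc k)
  have "x ^ k \<le> 1" using Suc.prems by (intro power_le_one) auto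
  hence "x * x ^ k \<le> x" using Suc.prems by (simp add: mult_left_le)
  hence "x ^ Suc k < 1" using Suc.prems by simp
  thus ?case using Suc by simp
qed

lemma Pg_mono_x: "0 \<le> x \<Longrightarrow> x \<le> y \<Longrightarrow> y < 1 \<Longrightarrow> Pg y k \<le> Pg x k"
proof (induction k)
  case 0 then show ?case by simp
next
  case (Suc k)
  have "x ^ Suc k \<le> y ^ Suc k" using Suc.prems by (intro power_mono) auto
  moreover have "y ^ Suc k < 1"
  proof -
    have "y ^ k \<le> 1" using Suc.prems by (intro power_le_one) auto
    hence "y * y ^ k \<le> y" using Suc.prems by (simp add: mult_left_le)
    thus ?thesis using Suc.prems by simp
  qed
  moreover have "Pg y k > 0" using Suc.prems by (intro Pg_pos) auto
  ultimately show ?case using Suc by (auto intro!: mult_mono)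
qed

lemma Pg_half_tail: "Pg (1/2) (4 + d) \<ge> (315/1024) * (15/16 + (1/2) ^ (4 + d))"
proof (induction d)
  case 0
  show ?case by (simp add: numeral_eq_Suc)
next
  case (Suc d)
  define t :: real where "t = (1/2) ^ (4 + d)"
  have "(1/2::real) ^ d \<le> 1" by (rule power_le_one) auto
  moreover have "t = (1/2) ^ d / 16" unfolding t_def by (simp add: power_add power_divide)
  ultimately have t: "0 \<le> t" "t \<le> 1/16" by (auto simp: t_def)
  have "Pg (1/2) (4 + Suc d) = Pg (1/2) (Suc (4 + d))" by simp
  also have "\<dots> = Pg (1/2) (4 + d) * (1 - t / 2)"
  proof -
    have h: "(1/2::real) ^ Suc (4 + d) = t / 2" unfolding t_def by (simp only: power_Suc)
    show ?thesis by (simp only: Pg.simps h)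
  qed
  also have "\<dots> \<ge> (315/1024) * (15/16 + t) * (1 - t / 2)"
    using Suc t unfolding t_def by (intro mult_right_mono) auto
  finally have a: "Pg (1/2) (4 + Suc d) \<ge> (315/1024) * (15/16 + t) * (1 - t / 2)" .
  have h: "t * t \<le> t * (1/16)" using t by (intro mult_left_mono) auto
  have e: "(15/16 + t) * (1 - t / 2) = 15/16 + 17/32 * t - t * t / 2" by (simp add: field_simps)
  have "(15/16 + t) * (1 - t / 2) \<ge> 15/16 + t / 2" using e h by linarith
  hence "(315/1024) * ((15/16 + t) * (1 - t / 2)) \<ge> (315/1024) * (15/16 + t / 2)"
    by (intro mult_left_mono) auto
  hence "(315/1024) * (15/16 + t) * (1 - t / 2) \<ge> (315/1024) * (15/16 + t / 2)"
    by (simp only: mult.assoc)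
  moreover have "(1/2::real) ^ (4 + Suc d) = t / 2" unfolding t_def by (simp only: add_Suc_right power_Suc)
  ultimately show ?case using a by simp
qed

lemma Pg_half_lower: "Pg (1/2) k \<ge> 2/7"
proof (cases "k \<ge> 4")
  case True
  then obtain d where d: "k = 4 + d" using le_Suc_ex by blast
  have nn: "(1/2::real) ^ (4 + d) \<ge> 0" by simp
  have "315/1024 * (15/16 + (1/2::real) ^ (4 + d)) \<ge> 4725/16384" using nn by simp
  thus ?thesis using Pg_half_tail[of d] unfolding d by linarith
next
  case False
  hence "k = 0 \<or> k = 1 \<or> k = 2 \<or> k = 3" by auto
  thus ?thesis by (auto simp: numeral_eq_Suc)
qed

lemma Pg_lower: "q \<ge> 2 \<Longrightarrow> Pg (1 / real q) k \<ge> 2/7"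
proof -
  assume q: "q \<ge> 2"
  have "Pg (1/2) k \<le> Pg (1 / real q) k" using q by (intro Pg_mono_x) (auto simp: field_simps)
  thus ?thesis using Pg_half_lower[of k] by simp
qed

lemma Cg_bound:
  assumes q: "q \<ge> 2"
  shows "real (Cg q m k) \<le> (if k \<le> m then real q ^ (k * (m - k)) / Pg (1 / real q) k else 0)"
proof (induction m arbitrary: k)
  case 0 then show ?case by simp
next
  case (Suc m)
  define x where "x = 1 / real q"
  have x: "0 \<le> x" "x < 1" using q by (auto simp: x_def)
  have Ppos: "\<And>k. Pg x k > 0" by (rule Pg_pos[OF x])
  show ?case
  proof (cases "k = 0")
    case True
    thus ?thesis using Suc[of 0] by simp
  next
    case False
    then obtain k' where k': "k = Suc k'" by (cases k) auto
    have C: "real (Cg q (Suc m) k) = real (Cg q m k) + real q ^ (m - k') * real (Cg q m k')"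
      using k' by simp
    consider "k \<le> m" | "k = Suc m" | "k > Suc m" by linarith
    thus ?thesis
    proof cases
      case 1
      then obtain d where d: "m = k + d" using le_Suc_ex by blast
      have i1: "real (Cg q m k) \<le> real q ^ (k * d) / Pg x k" using Suc[of k] 1 d by (simp add: x_def)
      have i2: "real (Cg q m k') \<le> real q ^ (k' * (Suc d)) / Pg x k'"
        using Suc[of k'] 1 d k' by (simp add: x_def)
      have e1: "real q ^ (m - k') * real q ^ (k' * Suc d) = real q ^ (k * Suc d)"
        using d k' by (simp add: power_add[symmetric] algebra_simps)
      have e2: "real q ^ (k * d) = real q ^ (k * Suc d) * x ^ k"
        using q by (simp add: x_def power_add power_mult_distrib field_simps)
      have Pk: "Pg x k = Pg x k' * (1 - x ^ k)" using k' by simp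
      have xk: "x ^ k < 1"
      proof -
        have "x ^ k' \<le> 1" using x by (intro power_le_one) auto
        hence "x * x ^ k' \<le> x" using x by (simp add: mult_left_le)
        thus ?thesis using x k' by simp
      qed
      have ee: "x ^ k / Pg x k + 1 / Pg x k' = 1 / Pg x k"
        using Ppos[of k'] xk unfolding Pk by (simp add: field_simps)
      have "real q ^ (m - k') * real (Cg q m k') \<le> real q ^ (m - k') * (real q ^ (k' * (Suc d)) / Pg x k')"
        using i2 by (intro mult_left_mono) auto
      hence "real (Cg q (Suc m) k) \<le> real q ^ (k * d) / Pg x k + real q ^ (m - k') * (real q ^ (k' * (Suc d)) / Pg x k')"
        using C i1 by linarith
      also have "\<dots> = real q ^ (k * Suc d) * (x ^ k / Pg x k + 1 / Pg x k')"
        using e1 e2 by (simp add: field_simps)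
      also have "\<dots> = real q ^ (k * Suc d) / Pg x k" by (simp add: ee)
      finally have fin: "real (Cg q (Suc m) k) \<le> real q ^ (k * Suc d) / Pg x k" .
      have eq: "(if k \<le> Suc m then real q ^ (k * (Suc m - k)) / Pg (1 / real q) k else 0) = real q ^ (k * Suc d) / Pg x k"
        using 1 d by (simp add: x_def Suc_diff_le)
      show ?thesis unfolding eq by (rule fin)
    next
      case 2
      have i1: "real (Cg q m k) = 0" using Suc[of k] 2 by simp
      have i2: "real (Cg q m k') \<le> 1 / Pg x k'" using Suc[of k'] 2 k' by (simp add: x_def)
      have "Pg x k \<le> Pg x k'" using k' Ppos[of k'] x by (simp add: mult_left_le)
      hence "1 / Pg x k' \<le> 1 / Pg x k" using Ppos by (intro divide_left_mono) auto
      thus ?thesis using C i1 i2 2 k' by (simp add: x_def)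
    next
      case 3
      thus ?thesis using Suc[of k] Suc[of k'] k' C by simp
    qed
  qed
qed

definition Asum :: "nat \<Rightarrow> nat \<Rightarrow> real" where
  "Asum q m = (\<Sum>k\<le>m. real q ^ (k * (m - k)))"

lemma Asum_rec: "Asum q (Suc (Suc m)) = 2 + real q ^ Suc m * Asum q m"
proof -
  have "Asum q (Suc (Suc m)) = 1 + (\<Sum>k\<le>Suc m. real q ^ (Suc k * (Suc (Suc m) - Suc k)))"
    unfolding Asum_def by (subst sum.atMost_Suc_shift) simp
  also have "(\<Sum>k\<le>Suc m. real q ^ (Suc k * (Suc (Suc m) - Suc k))) =
      (\<Sum>k\<le>m. real q ^ (Suc k * (Suc m - k))) + 1"
    by (subst sum.atMost_Suc) simp
  also have "(\<Sum>k\<le>m. real q ^ (Suc k * (Suc m - k))) = (\<Sum>k\<le>m. real q ^ Suc m * real q ^ (k * (m - k)))"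
  proof (rule sum.cong[OF refl])
    fix k assume "k \<in> {..m}"
    then obtain d where d: "m = k + d" using le_Suc_ex by auto
    have "Suc k * (Suc m - k) = Suc m + k * (m - k)" using d by (simp add: algebra_simps)
    thus "real q ^ (Suc k * (Suc m - k)) = real q ^ Suc m * real q ^ (k * (m - k))"
      by (simp add: power_add)
  qed
  also have "\<dots> = real q ^ Suc m * Asum q m" unfolding Asum_def by (simp add: sum_distrib_left)
  finally show ?thesis by simp
qed

lemma Asum_even': "q \<ge> 2 \<Longrightarrow> Asum q (2 * Suc p') \<le> 13/6 * real q ^ (Suc p' * Suc p') - 2/7"
proof (induction p')
  case 0
  have "Asum q 2 = 2 + real q" using Asum_rec[of q 0] by (simp add: Asum_def numeral_2_eq_2)
  thus ?case using 0 by simp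
next
  case (Suc p')
  define p where "p = Suc p'"
  have step: "q \<ge> 2" "p \<ge> 1" "Asum q (2 * p) \<le> 13/6 * real q ^ (p * p) - 2/7"
    using Suc by (auto simp: p_def)
  have qq: "real q ^ Suc (2 * p) \<ge> 8"
  proof -
    have "real q ^ Suc (2 * p) \<ge> 2 ^ Suc (2 * p)" using step by (intro power_mono) auto
    moreover have "(2::real) ^ 3 \<le> 2 ^ Suc (2 * p)" using step by (intro power_increasing) auto
    hence "(8::real) \<le> 2 ^ Suc (2 * p)" by simp
    ultimately show ?thesis by linarith
  qed
  have "Asum q (2 * Suc p) = 2 + real q ^ Suc (2 * p) * Asum q (2 * p)"
    using Asum_rec[of q "2 * p"] by simp
  also have "\<dots> \<le> 2 + real q ^ Suc (2 * p) * (13/6 * real q ^ (p * p) - 2/7)"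
    using step by (intro add_left_mono mult_left_mono) auto
  also have "\<dots> = 13/6 * (real q ^ Suc (2 * p) * real q ^ (p * p)) + 2 - 2/7 * real q ^ Suc (2 * p)"
    by (simp add: algebra_simps)
  also have "real q ^ Suc (2 * p) * real q ^ (p * p) = real q ^ (Suc p * Suc p)"
  proof -
    have "Suc (2 * p) + p * p = Suc p * Suc p" by simp
    thus ?thesis by (metis power_add)
  qed
  finally show ?case using qq by (simp add: p_def)
qed

lemma Asum_even: "q \<ge> 2 \<Longrightarrow> p \<ge> 1 \<Longrightarrow> Asum q (2 * p) \<le> 13/6 * real q ^ (p * p) - 2/7"
  using Asum_even'[of q "p - 1"] by simp

lemma Asum_odd: "q \<ge> 2 \<Longrightarrow> Asum q (2 * p + 1) \<le> 8/3 * real q ^ (p * p + p) - 2/3"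
proof (induction p)
  case 0
  show ?case by (simp add: Asum_def)
next
  case (Suc p)
  have qq: "real q ^ Suc (Suc (2 * p)) \<ge> 4"
  proof -
    have "real q ^ Suc (Suc (2 * p)) \<ge> 2 ^ Suc (Suc (2 * p))" using Suc by (intro power_mono) auto
    moreover have "(2::real) ^ 2 \<le> 2 ^ Suc (Suc (2 * p))" by (intro power_increasing) auto
    hence "(4::real) \<le> 2 ^ Suc (Suc (2 * p))" by simp
    ultimately show ?thesis by linarith
  qed
  have "Asum q (2 * Suc p + 1) = 2 + real q ^ Suc (Suc (2 * p)) * Asum q (2 * p + 1)"
    using Asum_rec[of q "2 * p + 1"] by simp
  also have "\<dots> \<le> 2 + real q ^ Suc (Suc (2 * p)) * (8/3 * real q ^ (p * p + p) - 2/3)"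
    using Suc by (intro add_left_mono mult_left_mono) auto
  also have "\<dots> = 8/3 * (real q ^ Suc (Suc (2 * p)) * real q ^ (p * p + p)) + 2 - 2/3 * real q ^ Suc (Suc (2 * p))"
    by (simp add: algebra_simps)
  also have "real q ^ Suc (Suc (2 * p)) * real q ^ (p * p + p) = real q ^ (Suc p * Suc p + Suc p)"
  proof -
    have "Suc (Suc (2 * p)) + (p * p + p) = Suc p * Suc p + Suc p" by simp
    thus ?thesis by (metis power_add)
  qed
  finally show ?case using qq by simp
qed

lemma Cg_sum_bound:
  assumes "q \<ge> 2"
  shows "real (\<Sum>k\<le>m. Cg q m k) \<le> 7/2 * Asum q m"
proof -
  have "real (\<Sum>k\<le>m. Cg q m k) = (\<Sum>k\<le>m. real (Cg q m k))" by simp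
  also have "\<dots> \<le> (\<Sum>k\<le>m. 7/2 * real q ^ (k * (m - k)))"
  proof (rule sum_mono)
    fix k assume k: "k \<in> {..m}"
    have P: "Pg (1 / real q) k \<ge> 2/7" using Pg_lower[OF assms] .
    have "real (Cg q m k) \<le> real q ^ (k * (m - k)) / Pg (1 / real q) k"
      using Cg_bound[OF assms, of m k] k by simp
    also have "\<dots> \<le> real q ^ (k * (m - k)) / (2/7)"
      using P by (intro divide_left_mono) auto
    finally show "real (Cg q m k) \<le> 7/2 * real q ^ (k * (m - k))" by simp
  qed
  also have "\<dots> = 7/2 * Asum q m" unfolding Asum_def by (simp add: sum_distrib_left)
  finally show ?thesis .
qed

lemma GL_final_bound:
  assumes q: "q \<ge> 2" and j: "j \<ge> 1"
  shows "7/2 * Asum q j \<le> 8 * real q powr (real j ^ 2 / 4)"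
proof (cases "even j")
  case True
  then obtain p where p: "j = 2 * p" by blast
  hence p1: "p \<ge> 1" using j by simp
  have "real j ^ 2 / 4 = real (p * p)" using p by (simp add: power2_eq_square)
  moreover have "real q powr real (p * p) = real q ^ (p * p)" using q by (intro powr_realpow) auto
  ultimately have e: "real q powr (real j ^ 2 / 4) = real q ^ (p * p)" by simp
  have "7/2 * Asum q j \<le> 7/2 * (13/6 * real q ^ (p * p) - 2/7)"
    using Asum_even[OF q p1] p by simp
  also have "\<dots> \<le> 8 * real q ^ (p * p)"
  proof -
    have "real q ^ (p * p) \<ge> 0" by simp
    moreover have "7/2 * (13/6 * real q ^ (p * p) - 2/7) = 91/12 * real q ^ (p * p) - 1" by (simp add: algebra_simps)
    ultimately show ?thesis by linarith
  qed
  finally show ?thesis using e by simp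
next
  case False
  then obtain p where p: "j = 2 * p + 1" using oddE by blast
  have jj: "real j ^ 2 / 4 = real (p * p + p) + 1/4" using p by (simp add: power2_eq_square field_simps)
  have "real q powr (real j ^ 2 / 4) = real q powr real (p * p + p) * real q powr (1/4)"
    unfolding jj by (rule powr_add)
  moreover have "real q powr real (p * p + p) = real q ^ (p * p + p)" using q by (intro powr_realpow) auto
  ultimately have e: "real q powr (real j ^ 2 / 4) = real q ^ (p * p + p) * real q powr (1/4)" by simp
  have r: "real q powr (1/4) \<ge> 7/6"
  proof -
    have "(7/6::real) ^ 4 \<le> 2" by (simp add: power4_eq_xxxx)
    hence "((7/6::real) ^ 4) powr (1/4) \<le> real q powr (1/4)"
      using q by (intro powr_mono2) auto
    moreover have "((7/6::real) ^ 4) powr (1/4) = 7/6"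
    proof -
      have a: "(7/6::real) powr (real 4) = (7/6)^4" by (rule powr_realpow) simp
      have "((7/6::real) ^ 4) powr (1/4) = ((7/6) powr (real 4)) powr (1/4)" by (simp only: a)
      also have "\<dots> = (7/6) powr (real 4 * (1/4))" by (rule powr_powr)
      also have "real 4 * (1/4) = (1::real)" by simp
      finally show ?thesis by simp
    qed
    ultimately show ?thesis by simp
  qed
  have qp: "real q ^ (p * p + p) \<ge> 0" by simp
  have A: "Asum q j \<le> 8/3 * real q ^ (p * p + p) - 2/3"
    using Asum_odd[OF q, of p] p by simp
  have "7/2 * Asum q j \<le> 7/2 * (8/3 * real q ^ (p * p + p) - 2/3)"
    using A by (rule mult_left_mono) simp
  also have "\<dots> \<le> 8 * (real q ^ (p * p + p) * (7/6))" using qp by simp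
  also have "\<dots> \<le> 8 * (real q ^ (p * p + p) * real q powr (1/4))"
    using r qp by (intro mult_left_mono) auto
  finally show ?thesis using e by simp
qed


fun Pu :: "nat \<Rightarrow> nat \<Rightarrow> real" where
  "Pu q 0 = 1"
| "Pu q (Suc k) = Pu q k * (1 - (1 / real q) ^ (2 * Suc k))"

lemma Pu_lower: "q \<ge> 2 \<Longrightarrow> Pu q k \<ge> 2/3 + (1/4) ^ k / 3"
proof (induction k)
  case 0 then show ?case by simp
next
  case (Suc k)
  define a :: real where "a = (1/4) ^ k"
  have a: "0 \<le> a" "a \<le> 1" unfolding a_def by (auto intro: power_le_one)
  define y where "y = (1 / real q) ^ (2 * Suc k)"
  have y0: "0 \<le> y" by (simp add: y_def)
  have "(1 / real q) ^ 2 \<le> 1/4"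
  proof -
    have "(1 / real q) ^ 2 \<le> (1/2) ^ 2" using Suc.prems by (intro power_mono) (auto simp: field_simps)
    thus ?thesis by (simp add: power2_eq_square)
  qed
  hence "y \<le> (1/4) ^ Suc k" unfolding y_def power_mult by (intro power_mono) auto
  hence y1: "y \<le> a / 4" by (simp add: a_def)
  have "Pu q (Suc k) = Pu q k * (1 - y)" by (simp add: y_def)
  also have "\<dots> \<ge> (2/3 + a/3) * (1 - a/4)"
    using Suc a y0 y1 by (intro mult_mono) (auto simp: a_def)
  finally have "Pu q (Suc k) \<ge> (2/3 + a/3) * (1 - a/4)" .
  moreover have "(2/3 + a/3) * (1 - a/4) \<ge> 2/3 + a/12"
  proof -
    have "a * a \<le> a * 1" using a by (intro mult_left_mono) auto
    moreover have "(2/3 + a/3) * (1 - a/4) = 2/3 + a/6 - a * a / 12" by (simp add: field_simps)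
    ultimately show ?thesis by linarith
  qed
  moreover have "(1/4::real) ^ Suc k / 3 = a / 12" by (simp add: a_def)
  ultimately show ?case by linarith
qed

lemma Pu_pos: "q \<ge> 2 \<Longrightarrow> Pu q k \<ge> 2/3"
proof -
  assume "q \<ge> 2"
  moreover have "(1/4::real) ^ k / 3 \<ge> 0" by simp
  ultimately show ?thesis using Pu_lower[of q k] by linarith
qed

lemma sub_eqI: "(a::nat) = b + c \<Longrightarrow> a - b = c" by simp

context qfield
begin

lemma Cu_bound:
  "real (Cu m k) \<le> (if k \<le> m then real q ^ (m * m - k * k) / Pu q k else 0)"
proof (induction m arbitrary: k)
  case 0 then show ?case by simp
next
  case (Suc m)
  define x where "x = 1 / real q"
  have q2: "q \<ge> 2" by (rule q_ge2)
  have x: "0 \<le> x" "x < 1" using q2 by (auto simp: x_def)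
  have Ppos: "\<And>k. Pu q k > 0"
  proof -
    fix k show "Pu q k > 0" using Pu_pos[OF q2, of k] by linarith
  qed
  have qx: "real q * x = 1" using q2 by (simp add: x_def)
  show ?case
  proof (cases "k = 0")
    case True
    have "real (Cu (Suc m) 0) = real q ^ (2 * m) * real q * real (Cu m 0)" by simp
    also have "\<dots> \<le> real q ^ (2 * m) * real q * real q ^ (m * m)"
      using Suc[of 0] by (intro mult_left_mono) auto
    also have "\<dots> = real q ^ (Suc m * Suc m)"
    proof -
      have "2 * m + 1 + m * m = Suc m * Suc m" by simp
      thus ?thesis by (metis power_add power_one_right)
    qed
    finally show ?thesis using True by simp
  next
    case False
    then obtain k' where k': "k = Suc k'" by (cases k) auto
    have C: "real (Cu (Suc m) k) = real q ^ (2 * (m - k)) * real q * real (Cu m k) + real q ^ (2 * (m - k')) * real (Cu m k')"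
      using k' by simp
    consider "k \<le> m" | "k = Suc m" | "k > Suc m" by linarith
    thus ?thesis
    proof cases
      case 1
      then obtain d where d: "m = k + d" using le_Suc_ex by blast
      have i1: "real (Cu m k) \<le> real q ^ (d * d + 2 * k * d) / Pu q k"
      proof -
        have "m * m - k * k = d * d + 2 * k * d" by (rule sub_eqI) (simp add: d algebra_simps)
        thus ?thesis using Suc[of k] 1 by simp
      qed
      have i2: "real (Cu m k') \<le> real q ^ (d * d + 2 * k * d + 2 * k - 1) / Pu q k'"
      proof -
        have "m * m - k' * k' = d * d + 2 * k * d + 2 * k - 1"
          using k' by (intro sub_eqI) (simp add: d algebra_simps)
        thus ?thesis using Suc[of k'] 1 k' by simp
      qed
      define T where "T = (d + 1) * (d + 1) + 2 * k * (d + 1)"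
      have e1: "real q ^ (2 * (m - k)) * real q * real q ^ (d * d + 2 * k * d) = real q ^ T * x ^ (2 * k)"
      proof -
        have "T = 2 * (m - k) + 1 + (d * d + 2 * k * d) + 2 * k" by (simp add: T_def d algebra_simps)
        hence "real q ^ T * x ^ (2 * k) = real q ^ (2 * (m - k)) * real q * real q ^ (d * d + 2 * k * d) * (real q * x) ^ (2 * k)"
          by (simp add: power_add power_mult_distrib algebra_simps)
        thus ?thesis by (simp add: qx)
      qed
      have e2: "real q ^ (2 * (m - k')) * real q ^ (d * d + 2 * k * d + 2 * k - 1) = real q ^ T"
      proof -
        have "2 * (m - k') + (d * d + 2 * k * d + 2 * k - 1) = T" using k' by (simp add: T_def d algebra_simps)
        thus ?thesis by (metis power_add)
      qed
      have xk: "x ^ (2 * k) < 1"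
      proof -
        have "x ^ (2 * k) \<le> x ^ 1" using x k' by (intro power_decreasing) auto
        thus ?thesis using x by simp
      qed
      have Pk: "Pu q k = Pu q k' * (1 - x ^ (2 * k))" using k' by (simp add: x_def)
      have ee: "x ^ (2 * k) / Pu q k + 1 / Pu q k' = 1 / Pu q k"
        using Ppos[of k'] xk unfolding Pk by (simp add: field_simps)
      have a1: "real q ^ (2 * (m - k)) * real q * real (Cu m k) \<le> real q ^ (2 * (m - k)) * real q * (real q ^ (d * d + 2 * k * d) / Pu q k)"
        using i1 by (intro mult_left_mono) auto
      have a2: "real q ^ (2 * (m - k')) * real (Cu m k') \<le> real q ^ (2 * (m - k')) * (real q ^ (d * d + 2 * k * d + 2 * k - 1) / Pu q k')"
        using i2 by (intro mult_left_mono) auto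
      have "real (Cu (Suc m) k) \<le> real q ^ (2 * (m - k)) * real q * (real q ^ (d * d + 2 * k * d) / Pu q k) + real q ^ (2 * (m - k')) * (real q ^ (d * d + 2 * k * d + 2 * k - 1) / Pu q k')"
        using C a1 a2 by linarith
      also have "\<dots> = real q ^ T * (x ^ (2 * k) / Pu q k + 1 / Pu q k')"
        using e1 e2 by (simp add: field_simps)
      also have "\<dots> = real q ^ T / Pu q k" by (simp add: ee)
      finally have fin: "real (Cu (Suc m) k) \<le> real q ^ T / Pu q k" .
      have "Suc m * Suc m - k * k = T" by (rule sub_eqI) (simp add: T_def d algebra_simps)
      hence eq: "(if k \<le> Suc m then real q ^ (Suc m * Suc m - k * k) / Pu q k else 0) = real q ^ T / Pu q k"
        using 1 by simp
      show ?thesis unfolding eq by (rule fin)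
    next
      case 2
      have i1: "real (Cu m k) = 0" using Suc[of k] 2 by simp
      have i2: "real (Cu m k') \<le> 1 / Pu q k'" using Suc[of k'] 2 k' by simp
      have "(1 / real q) ^ (2 * Suc k') \<ge> 0" by simp
      hence "Pu q k \<le> Pu q k'" using k' Ppos[of k'] by (simp add: mult_left_le)
      hence "1 / Pu q k' \<le> 1 / Pu q k" using Ppos by (intro divide_left_mono) auto
      thus ?thesis using C i1 i2 2 k' by simp
    next
      case 3
      thus ?thesis using Suc[of k] Suc[of k'] k' C by simp
    qed
  qed
qed

lemma geo8: "(\<Sum>k\<le>m. (if k = 0 then 1 else 6 * (1/8::real) ^ k)) \<le> 13/7 - 6/7 * (1/8) ^ m"
proof (induction m)
  case 0 then show ?case by simp
next
  case (Suc m)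
  define a :: real where "a = (1/8) ^ m"
  have "(\<Sum>k\<le>Suc m. (if k = 0 then 1 else 6 * (1/8::real) ^ k)) =
      (\<Sum>k\<le>m. (if k = 0 then 1 else 6 * (1/8::real) ^ k)) + 6 * (1/8) ^ Suc m"
    by simp
  moreover have "(1/8::real) ^ Suc m = a / 8" by (simp add: a_def)
  ultimately show ?case using Suc by (simp add: a_def[symmetric]) 
qed

lemma Cu_sum_bound: "real (\<Sum>k\<le>m. Cu m k) \<le> 2 * real q ^ (m * m)"
proof -
  have q2: "q \<ge> 2" by (rule q_ge2)
  have "real (\<Sum>k\<le>m. Cu m k) = (\<Sum>k\<le>m. real (Cu m k))" by simp
  also have "\<dots> \<le> (\<Sum>k\<le>m. real q ^ (m * m) * (if k = 0 then 1 else 6 * (1/8) ^ k))"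
  proof (rule sum_mono)
    fix k assume k: "k \<in> {..m}"
    have b: "real (Cu m k) \<le> real q ^ (m * m - k * k) / Pu q k" using Cu_bound[of m k] k by simp
    show "real (Cu m k) \<le> real q ^ (m * m) * (if k = 0 then 1 else 6 * (1/8) ^ k)"
    proof (cases "k = 0")
      case True thus ?thesis using b by simp
    next
      case False
      have P: "Pu q k \<ge> 2/3" using Pu_pos[OF q2] .
      have "real q ^ (m * m - k * k) / Pu q k \<le> real q ^ (m * m - k * k) / (2/3)"
        using P by (intro divide_left_mono) auto
      hence "real (Cu m k) \<le> real q ^ (m * m - k * k) / (2/3)" using b by linarith
      also have "real q ^ (m * m - k * k) \<le> real q ^ (m * m) * (4 * (1/8) ^ k)"
      proof -
        have km: "k * k \<le> m * m" using k by (simp add: mult_le_mono)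
        have s: "real q ^ (m * m - k * k) * real q ^ (k * k) = real q ^ (m * m)"
          using km by (simp flip: power_add)
        have kk: "3 * k \<le> k * k + 2"
        proof (cases "k \<le> 2")
          case True
          hence "k = 1 \<or> k = 2" using False by auto
          thus ?thesis by auto
        next
          case False2: False
          hence "3 \<le> k" by simp
          hence "3 * k \<le> k * k" by (rule mult_le_mono1)
          thus ?thesis by linarith
        qed
        have "(2::real) ^ (3 * k) \<le> 2 ^ (k * k + 2)"
          using kk by (intro power_increasing) auto
        hence "(8::real) ^ k \<le> 4 * 2 ^ (k * k)" by (simp add: power_mult power_add)
        also have "(2::real) ^ (k * k) \<le> real q ^ (k * k)" using q2 by (intro power_mono) auto
        finally have "(8::real) ^ k \<le> 4 * real q ^ (k * k)" by simp
        hence "real q ^ (m * m - k * k) * 8 ^ k \<le> real q ^ (m * m - k * k) * (4 * real q ^ (k * k))"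
          by (intro mult_left_mono) auto
        also have "\<dots> = 4 * real q ^ (m * m)" using s by simp
        finally have "real q ^ (m * m - k * k) * 8 ^ k \<le> 4 * real q ^ (m * m)" .
        thus ?thesis by (simp add: power_one_over field_simps)
      qed
      hence "real q ^ (m * m - k * k) / (2/3) \<le> real q ^ (m * m) * (4 * (1/8) ^ k) / (2/3)"
        by (intro divide_right_mono) auto
      finally show ?thesis using False by simp
    qed
  qed
  also have "\<dots> = real q ^ (m * m) * (\<Sum>k\<le>m. (if k = 0 then 1 else 6 * (1/8) ^ k))"
    by (simp add: sum_distrib_left)
  also have "\<dots> \<le> real q ^ (m * m) * (13/7)"
  proof -
    have "(1/8::real) ^ m \<ge> 0" by simp
    hence "(\<Sum>k\<le>m. (if k = 0 then 1 else 6 * (1/8::real) ^ k)) \<le> 13/7" using geo8[of m] by linarith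
    thus ?thesis by (intro mult_left_mono) auto
  qed
  also have "\<dots> \<le> 2 * real q ^ (m * m)" by simp
  finally show ?thesis .
qed

end


lemma field_card_ge2: "CARD('a::{field,finite}) \<ge> 2"
proof -
  have "card {0::'a, 1} \<le> CARD('a)" by (intro card_mono) auto
  thus ?thesis by simp
qed

theorem lemma2p4:
  fixes q j :: nat
  assumes "1 \<le> j" and "j \<le> CARD('n::finite)"
  shows "(CARD('a::{field,finite}) = q \<longrightarrow>
            real (card (tuple_orbits (GL_grp :: ('a^'n^'n) set) j))
              \<le> 8 * real q powr (real j ^ 2 / 4))
       \<and> (CARD('b::{field,finite}) = q ^ 2 \<longrightarrow>
            real (card (tuple_orbits (GU_grp q :: ('b^'n^'n) set) j))
              \<le> 2 * real q ^ (j ^ 2))"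
proof (intro conjI impI)
  assume cq: "CARD('a::{field,finite}) = q"
  have q2: "q \<ge> 2" using field_card_ge2[where 'a='a] cq by simp
  have "card (tuple_orbits (GL_grp :: ('a^'n^'n) set) j) \<le> card (ginv ` {xs :: ('a^'n) list. length xs = j})"
  proof (rule orbits_card_le)
    fix A B :: "'a^'n^'n" assume "A \<in> GL_grp" "B \<in> GL_grp"
    thus "A ** B \<in> GL_grp" unfolding GL_grp_def by (auto intro: invertible_mult)
  next
    fix xs ys :: "('a^'n) list" assume "ginv xs = ginv ys"
    thus "\<exists>A\<in>GL_grp. map (\<lambda>v. A *v v) xs = ys" using GL_trans unfolding GL_grp_def by blast
  qed
  also have "\<dots> \<le> (\<Sum>k\<le>j. Cg CARD('a) j k)" by (rule GL_count)
  finally have "real (card (tuple_orbits (GL_grp :: ('a^'n^'n) set) j)) \<le> real (\<Sum>k\<le>j. Cg q j k)"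
    using cq by (simp only: of_nat_le_iff)
  also have "\<dots> \<le> 7/2 * Asum q j" by (rule Cg_sum_bound[OF q2])
  also have "\<dots> \<le> 8 * real q powr (real j ^ 2 / 4)" by (rule GL_final_bound[OF q2 assms(1)])
  finally show "real (card (tuple_orbits (GL_grp :: ('a^'n^'n) set) j)) \<le> 8 * real q powr (real j ^ 2 / 4)" .
next
  assume cq: "CARD('b::{field,finite}) = q ^ 2"
  interpret qfield q "TYPE('b)" by unfold_locales (rule cq)
  have "card (tuple_orbits (GU_grp q :: ('b^'n^'n) set) j) \<le> card (uinv ` {xs :: ('b^'n) list. length xs = j})"
  proof (rule orbits_card_le)
    fix A B :: "'b^'n^'n" assume "A \<in> GU_grp q" "B \<in> GU_grp q"
    thus "A ** B \<in> GU_grp q" by (rule GU_mult)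
  next
    fix xs ys :: "('b^'n) list" assume "uinv xs = uinv ys"
    thus "\<exists>A\<in>GU_grp q. map (\<lambda>v. A *v v) xs = ys" by (rule GU_trans)
  qed
  also have "\<dots> \<le> (\<Sum>k\<le>j. Cu j k)" by (rule GU_count)
  finally have "real (card (tuple_orbits (GU_grp q :: ('b^'n^'n) set) j)) \<le> real (\<Sum>k\<le>j. Cu j k)"
    by (simp only: of_nat_le_iff)
  also have "\<dots> \<le> 2 * real q ^ (j * j)" by (rule Cu_sum_bound)
  finally show "real (card (tuple_orbits (GU_grp q :: ('b^'n^'n) set) j)) \<le> 2 * real q ^ (j ^ 2)"
    by (simp add: power2_eq_square)
qed


end
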